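(* Let $\mathbb K$ be a field with $2\in\mathbb K^\times$, $A$ a unital commutative associative $\mathbb K$-algebra, $\mathfrak k$ a $\mathbb K$-Lie algebra and $\mathfrak g=A\otimes\mathfrak k$. Then $$P(Z_2(\mathfrak g))=(\Lambda^2(A)\otimes S^2(\mathfrak k))\oplus(A\otimes Z_2(\mathfrak k))\oplus(I_A\otimes\Lambda^2(\mathfrak k)).$$
   Context: $\mathfrak g$ has bracket $[a\otimes x,a'\otimes x']=aa'\otimes[x,x']$, $ax=a\otimes x$, unit $\mathbf 1$. $v\wedge w=\tfrac12(v\otimes w-w\otimes v)$, $v\vee w=\tfrac12(v\otimes w+w\otimes v)$. For a Lie algebra $\mathfrak h$, $Z_2(\mathfrak h)$ is the kernel of $\Lambda^2(\mathfrak h)\to\mathfrak h$, $u\wedge v\mapsto[u,v]$. $I_A$ is the kernel of multiplication $S^2(A)\to A$. $P=(p_1,p_2,p_3)$ is the linear isomorphism $\Lambda^2(\mathfrak g)\to(\Lambda^2(A)\otimes S^2(\mathfrak k))\oplus(A\otimes\Lambda^2(\mathfrak k))\oplus(I_A\otimes\Lambda^2(\mathfrak k))$ with $p_1(ax\wedge by)=a\wedge b\otimes x\vee y$, $p_2(ax\wedge by)=ab\otimes x\wedge y$, $p_3(ax\wedge by)=(a\vee b-ab\vee\mathbf 1)\otimes x\wedge y$. *)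

theory Defs
  imports Complex_Main "HOL-Library.Function_Algebras"
begin

text \<open>
Tensor products of vector spaces over a field 'f are modelled by presentations:
a presented space is an index type 'i together with a set R of relations in the
free vector space of finitely supported functions 'i => 'f; the space itself is
the quotient (free space) / span R.  Subspaces are represented by their full
preimages in the free space (subspaces of the free space containing span R).
\<close>

definition free_space :: "('i \<Rightarrow> 'f::zero) set" where
  "free_space = {f. finite {i. f i \<noteq> 0}}"

definition delta :: "'i \<Rightarrow> 'i \<Rightarrow> 'f::zero_neq_one" where
  "delta i = (\<lambda>j. if j = i then 1 else 0)"

definition smul :: "'f::times \<Rightarrow> ('i \<Rightarrow> 'f) \<Rightarrow> ('i \<Rightarrow> 'f)" where
  "smul c f = (\<lambda>i. c * f i)"

definition lspan :: "('i \<Rightarrow> 'f::field) set \<Rightarrow> ('i \<Rightarrow> 'f) set" where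
  "lspan S = {v. \<exists>F c. finite F \<and> F \<subseteq> S \<and> v = (\<Sum>s\<in>F. smul (c s) s)}"

text \<open>relations presenting a vector space V (with scalar multiplication sc) as a quotient of
  the free space on V\<close>
definition lin_rel :: "('f::field \<Rightarrow> 'v::ab_group_add \<Rightarrow> 'v) \<Rightarrow> ('v \<Rightarrow> 'f) set" where
  "lin_rel sc = {delta (a + b) - delta a - delta b | a b. True}
              \<union> {delta (sc c a) - smul c (delta a) | c a. True}"

definition ptens :: "('i \<Rightarrow> 'f::times) \<Rightarrow> ('j \<Rightarrow> 'f) \<Rightarrow> ('i \<times> 'j \<Rightarrow> 'f)" where
  "ptens f g = (\<lambda>(i, j). f i * g j)"

definition tens_rel :: "('i \<Rightarrow> 'f::field) set \<Rightarrow> ('j \<Rightarrow> 'f) set \<Rightarrow> ('i \<times> 'j \<Rightarrow> 'f) set" where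
  "tens_rel R1 R2 = {ptens r (delta j) | r j. r \<in> R1} \<union> {ptens (delta i) r | i r. r \<in> R2}"

definition wedge :: "('i \<Rightarrow> 'f::field) \<Rightarrow> ('i \<Rightarrow> 'f) \<Rightarrow> ('i \<times> 'i \<Rightarrow> 'f)" where
  "wedge v w = smul (inverse 2) (ptens v w - ptens w v)"

definition vee :: "('i \<Rightarrow> 'f::field) \<Rightarrow> ('i \<Rightarrow> 'f) \<Rightarrow> ('i \<times> 'i \<Rightarrow> 'f)" where
  "vee v w = smul (inverse 2) (ptens v w + ptens w v)"

definition Lam2 :: "('i \<Rightarrow> 'f::field) set \<Rightarrow> ('i \<times> 'i \<Rightarrow> 'f) set" where
  "Lam2 R = lspan ({wedge v w | v w. v \<in> free_space \<and> w \<in> free_space} \<union> tens_rel R R)"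

definition Sym2 :: "('i \<Rightarrow> 'f::field) set \<Rightarrow> ('i \<times> 'i \<Rightarrow> 'f) set" where
  "Sym2 R = lspan ({vee v w | v w. v \<in> free_space \<and> w \<in> free_space} \<union> tens_rel R R)"

definition lext :: "('i \<Rightarrow> ('j \<Rightarrow> 'f::field)) \<Rightarrow> ('i \<Rightarrow> 'f) \<Rightarrow> ('j \<Rightarrow> 'f)" where
  "lext \<phi> t = (\<Sum>i\<in>{i. t i \<noteq> 0}. smul (t i) (\<phi> i))"

definition Z2 :: "('i \<Rightarrow> 'f::field) set \<Rightarrow> ('i \<times> 'i \<Rightarrow> ('i \<Rightarrow> 'f)) \<Rightarrow> ('i \<times> 'i \<Rightarrow> 'f) set" where
  "Z2 R brk = {t \<in> Lam2 R. lext brk t \<in> lspan R}"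

definition I_A :: "('f::field \<Rightarrow> 'a::ab_group_add \<Rightarrow> 'a) \<Rightarrow> ('a \<Rightarrow> 'a \<Rightarrow> 'a) \<Rightarrow> ('a \<times> 'a \<Rightarrow> 'f) set" where
  "I_A sA mA = {t \<in> Sym2 (lin_rel sA). lext (\<lambda>(a, b). delta (mA a b)) t \<in> lspan (lin_rel sA)}"

definition g_rel :: "('f::field \<Rightarrow> 'a::ab_group_add \<Rightarrow> 'a) \<Rightarrow> ('f \<Rightarrow> 'k::ab_group_add \<Rightarrow> 'k)
    \<Rightarrow> ('a \<times> 'k \<Rightarrow> 'f) set" where
  "g_rel sA sK = tens_rel (lin_rel sA) (lin_rel sK)"

definition g_br :: "('a \<Rightarrow> 'a \<Rightarrow> 'a) \<Rightarrow> ('k \<Rightarrow> 'k \<Rightarrow> 'k)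
    \<Rightarrow> ('a \<times> 'k) \<times> ('a \<times> 'k) \<Rightarrow> ('a \<times> 'k \<Rightarrow> 'f::field)" where
  "g_br mA brK = (\<lambda>((a, x), (b, y)). ptens (delta (mA a b)) (delta (brK x y)))"

text \<open>The components of P on generators ax (x) by (they agree with the paper's formulas on
  ax wedge by, the latter being half the antisymmetrisation)\<close>
definition p1 :: "('a \<times> 'k) \<times> ('a \<times> 'k) \<Rightarrow> (('a \<times> 'a) \<times> ('k \<times> 'k) \<Rightarrow> 'f::field)" where
  "p1 = (\<lambda>((a, x), (b, y)). ptens (wedge (delta a) (delta b)) (vee (delta x) (delta y)))"

definition p2 :: "('a \<Rightarrow> 'a \<Rightarrow> 'a) \<Rightarrow> ('a \<times> 'k) \<times> ('a \<times> 'k) \<Rightarrow> ('a \<times> ('k \<times> 'k) \<Rightarrow> 'f::field)" where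
  "p2 mA = (\<lambda>((a, x), (b, y)). ptens (delta (mA a b)) (wedge (delta x) (delta y)))"

definition p3 :: "('a \<Rightarrow> 'a \<Rightarrow> 'a) \<Rightarrow> 'a \<Rightarrow> ('a \<times> 'k) \<times> ('a \<times> 'k)
    \<Rightarrow> (('a \<times> 'a) \<times> ('k \<times> 'k) \<Rightarrow> 'f::field)" where
  "p3 mA oneA = (\<lambda>((a, x), (b, y)).
     ptens (vee (delta a) (delta b) - vee (delta (mA a b)) (delta oneA)) (wedge (delta x) (delta y)))"

end

theory Submission
  imports Defs
begin

lemma sum_fun_apply: "(\<Sum>i\<in>S. f i) x = (\<Sum>i\<in>S. (f i x::'b::comm_monoid_add))"
  by (induction S rule: infinite_finite_induct) (auto simp: plus_fun_apply zero_fun_apply)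

lemma smul_apply: "smul c f i = c * f i" by (simp add: smul_def)
lemma ptens_apply: "ptens f g (i, j) = f i * g j" by (simp add: ptens_def)
lemmas fun_app_simps = plus_fun_apply zero_fun_apply minus_apply uminus_apply smul_apply ptens_apply
declare plus_fun_apply[simp del] zero_fun_apply[simp del] minus_apply[simp del] uminus_apply[simp del]
lemma smul_add: "smul (c::'f::field) (f + g) = smul c f + smul c g" by (simp add: fun_eq_iff fun_app_simps algebra_simps)
lemma smul_diff: "smul (c::'f::field) (f - g) = smul c f - smul c g" by (simp add: fun_eq_iff fun_app_simps algebra_simps)
lemma smul_neg: "smul (c::'f::field) (- f) = - smul c f" by (simp add: fun_eq_iff fun_app_simps algebra_simps)
lemma smul_add_left: "smul ((c::'f::field) + d) f = smul c f + smul d f" by (simp add: fun_eq_iff fun_app_simps algebra_simps)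
lemma smul_smul: "smul (c::'f::field) (smul d f) = smul (c * d) f" by (simp add: fun_eq_iff fun_app_simps algebra_simps)
lemma smul_one[simp]: "smul (1::'f::field) f = f" by (simp add: fun_eq_iff fun_app_simps)
lemma smul_zero_left[simp]: "smul 0 f = (0 :: _ \<Rightarrow> 'f::field)" by (simp add: fun_eq_iff fun_app_simps)
lemma smul_zero_right[simp]: "smul c (0 :: _ \<Rightarrow> 'f::field) = 0" by (simp add: fun_eq_iff fun_app_simps)
lemma smul_sum: "smul c (\<Sum>i\<in>S. f i) = (\<Sum>i\<in>S. smul c (f i :: _ \<Rightarrow> 'f::field))"
  by (induction S rule: infinite_finite_induct) (simp_all add: smul_add)

lemma delta_apply: "delta i j = (if j = i then 1 else 0)" by (simp add: delta_def)

lemma ptens_add1: "ptens (f + f') (g :: _ \<Rightarrow> 'f::field) = ptens f g + ptens f' g" by (simp add: fun_eq_iff fun_app_simps algebra_simps)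
lemma ptens_add2: "ptens (f :: _ \<Rightarrow> 'f::field) (g + g') = ptens f g + ptens f g'" by (simp add: fun_eq_iff fun_app_simps algebra_simps)
lemma ptens_diff1: "ptens (f - f') g = ptens f g - ptens f' (g :: _ \<Rightarrow> 'f::field)" by (simp add: fun_eq_iff fun_app_simps algebra_simps)
lemma ptens_diff2: "ptens f (g - g') = ptens f g - ptens f (g' :: _ \<Rightarrow> 'f::field)" by (simp add: fun_eq_iff fun_app_simps algebra_simps)
lemma ptens_neg1: "ptens (- f) g = - ptens f (g :: _ \<Rightarrow> 'f::field)" by (simp add: fun_eq_iff fun_app_simps)
lemma ptens_neg2: "ptens f (- g) = - ptens f (g :: _ \<Rightarrow> 'f::field)" by (simp add: fun_eq_iff fun_app_simps)
lemma ptens_smul1: "ptens (smul c f) g = smul c (ptens f (g :: _ \<Rightarrow> 'f::field))" by (simp add: fun_eq_iff fun_app_simps)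
lemma ptens_smul2: "ptens f (smul c g) = smul c (ptens f (g :: _ \<Rightarrow> 'f::field))" by (simp add: fun_eq_iff fun_app_simps algebra_simps)
lemma ptens_zero1[simp]: "ptens 0 g = (0 :: _ \<Rightarrow> 'f::field)" by (simp add: fun_eq_iff fun_app_simps)
lemma ptens_zero2[simp]: "ptens f 0 = (0 :: _ \<Rightarrow> 'f::field)" by (simp add: fun_eq_iff fun_app_simps)
lemma ptens_delta: "ptens (delta i) (delta j) = (delta (i, j) :: _ \<Rightarrow> 'f::field)"
  by (simp add: fun_eq_iff fun_app_simps delta_def)
lemma ptens_sum1: "ptens (\<Sum>i\<in>S. f i) g = (\<Sum>i\<in>S. ptens (f i) (g :: _ \<Rightarrow> 'f::field))"
  by (induction S rule: infinite_finite_induct) (simp_all add: ptens_add1)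
lemma ptens_sum2: "ptens g (\<Sum>i\<in>S. f i) = (\<Sum>i\<in>S. ptens g (f i :: _ \<Rightarrow> 'f::field))"
  by (induction S rule: infinite_finite_induct) (simp_all add: ptens_add2)

lemma wedge_swap: "wedge w v = - wedge v (w :: _ \<Rightarrow> 'f::field)"
  by (simp add: wedge_def fun_eq_iff fun_app_simps algebra_simps)
lemma vee_swap: "vee w v = vee v (w :: _ \<Rightarrow> 'f::field)"
  by (simp add: vee_def fun_eq_iff fun_app_simps algebra_simps)

lemma free_iff: "f \<in> free_space \<longleftrightarrow> finite {i. f i \<noteq> 0}" by (simp add: free_space_def)

lemma free_zero[simp,intro]: "0 \<in> free_space" by (simp add: free_iff zero_fun_apply)
lemma free_delta[simp,intro]: "(delta i :: _ \<Rightarrow> 'f::field) \<in> free_space"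
  by (simp add: free_iff delta_def)
lemma free_add[intro]: "f \<in> free_space \<Longrightarrow> g \<in> free_space \<Longrightarrow> f + g \<in> (free_space :: (_ \<Rightarrow> 'f::field) set)"
  unfolding free_iff by (rule finite_subset[of _ "{i. f i \<noteq> 0} \<union> {i. g i \<noteq> 0}"]) (auto simp: fun_app_simps)
lemma free_smul[intro]: "f \<in> free_space \<Longrightarrow> smul c f \<in> (free_space :: (_ \<Rightarrow> 'f::field) set)"
  unfolding free_iff by (rule finite_subset[of _ "{i. f i \<noteq> 0}"]) (auto simp: fun_app_simps)
lemma free_neg[intro]: "f \<in> free_space \<Longrightarrow> - f \<in> (free_space :: (_ \<Rightarrow> 'f::field) set)"
  unfolding free_iff by (simp add: fun_app_simps)
lemma free_diff[intro]: "f \<in> free_space \<Longrightarrow> g \<in> free_space \<Longrightarrow> f - g \<in> (free_space :: (_ \<Rightarrow> 'f::field) set)"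
  using free_add[of f "- g"] free_neg[of g] by simp
lemma free_sum[intro]: "(\<And>i. i \<in> S \<Longrightarrow> f i \<in> free_space) \<Longrightarrow> (\<Sum>i\<in>S. f i) \<in> (free_space :: (_ \<Rightarrow> 'f::field) set)"
  by (induction S rule: infinite_finite_induct) auto
lemma free_ptens[intro]: "f \<in> free_space \<Longrightarrow> g \<in> free_space \<Longrightarrow> ptens f g \<in> (free_space :: (_ \<Rightarrow> 'f::field) set)"
  unfolding free_iff
  by (rule finite_subset[of _ "{i. f i \<noteq> 0} \<times> {i. g i \<noteq> 0}"]) (auto simp: ptens_def)
lemma free_wedge[intro]: "f \<in> free_space \<Longrightarrow> g \<in> free_space \<Longrightarrow> wedge f g \<in> (free_space :: (_ \<Rightarrow> 'f::field) set)"
  unfolding wedge_def by auto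
lemma free_vee[intro]: "f \<in> free_space \<Longrightarrow> g \<in> free_space \<Longrightarrow> vee f g \<in> (free_space :: (_ \<Rightarrow> 'f::field) set)"
  unfolding vee_def by auto

declare free_add[simp] free_smul[simp] free_neg[simp] free_diff[simp] free_ptens[simp] free_wedge[simp] free_vee[simp]

section \<open>Subspaces and spans\<close>

definition subsp :: "('i \<Rightarrow> 'f::field) set \<Rightarrow> bool" where
  "subsp V \<longleftrightarrow> 0 \<in> V \<and> (\<forall>x\<in>V. \<forall>y\<in>V. x + y \<in> V) \<and> (\<forall>c. \<forall>x\<in>V. smul c x \<in> V)"

lemma subsp_zero: "subsp V \<Longrightarrow> 0 \<in> V" by (simp add: subsp_def)
lemma subsp_add: "subsp V \<Longrightarrow> x \<in> V \<Longrightarrow> y \<in> V \<Longrightarrow> x + y \<in> V" by (simp add: subsp_def)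
lemma subsp_smul: "subsp V \<Longrightarrow> x \<in> V \<Longrightarrow> smul c x \<in> V" by (simp add: subsp_def)
lemma subsp_neg: assumes "subsp V" "x \<in> V" shows "- x \<in> V"
proof -
  have "smul (-1) x = - x" by (simp add: fun_eq_iff fun_app_simps)
  then show ?thesis using subsp_smul[of V x "-1"] assms by simp
qed
lemma subsp_diff: "subsp V \<Longrightarrow> x \<in> V \<Longrightarrow> y \<in> V \<Longrightarrow> x - y \<in> V"
  using subsp_add[of V x "- y"] subsp_neg[of V y] by simp
lemma subsp_sum: "subsp V \<Longrightarrow> (\<And>i. i \<in> S \<Longrightarrow> f i \<in> V) \<Longrightarrow> (\<Sum>i\<in>S. f i) \<in> V"
  by (induction S rule: infinite_finite_induct) (auto simp: subsp_zero subsp_add)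

lemma subsp_free: "subsp (free_space :: (_ \<Rightarrow> 'f::field) set)"
  by (auto simp: subsp_def)

lemma lspan_subsp: "subsp (lspan S)"
proof -
  have add: "v + w \<in> lspan S" if v: "v \<in> lspan S" and w: "w \<in> lspan S" for v w
  proof -
    from v obtain F c where F: "finite F" "F \<subseteq> S" "v = (\<Sum>s\<in>F. smul (c s) s)"
      by (auto simp: lspan_def)
    from w obtain G d where G: "finite G" "G \<subseteq> S" "w = (\<Sum>s\<in>G. smul (d s) s)"
      by (auto simp: lspan_def)
    define c' where "c' s = (if s \<in> F then c s else 0)" for s
    define d' where "d' s = (if s \<in> G then d s else 0)" for s
    have "v = (\<Sum>s\<in>F \<union> G. smul (c' s) s)"
      unfolding F(3) by (rule sum.mono_neutral_cong_left) (auto simp: F G c'_def)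
    moreover have "w = (\<Sum>s\<in>F \<union> G. smul (d' s) s)"
      unfolding G(3) by (rule sum.mono_neutral_cong_left) (auto simp: F G d'_def)
    ultimately have "v + w = (\<Sum>s\<in>F \<union> G. smul (c' s) s + smul (d' s) s)"
      by (simp only: sum.distrib)
    also have "\<dots> = (\<Sum>s\<in>F \<union> G. smul (c' s + d' s) s)"
      by (simp only: smul_add_left)
    finally have eq: "v + w = (\<Sum>s\<in>F \<union> G. smul (c' s + d' s) s)" .
    have "finite (F \<union> G)" "F \<union> G \<subseteq> S" using F G by auto
    with eq show ?thesis unfolding lspan_def
      by (intro CollectI exI[of _ "F \<union> G"] exI[of _ "\<lambda>s. c' s + d' s"]) simp
  qed
  have sm: "smul k v \<in> lspan S" if v: "v \<in> lspan S" for v k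
  proof -
    from v obtain F c where F: "finite F" "F \<subseteq> S" "v = (\<Sum>s\<in>F. smul (c s) s)"
      by (auto simp: lspan_def)
    then have "smul k v = (\<Sum>s\<in>F. smul (k * c s) s)"
      by (simp add: smul_sum smul_smul)
    then show ?thesis using F unfolding lspan_def
      by (intro CollectI exI[of _ F] exI[of _ "\<lambda>s. k * c s"]) simp
  qed
  have "0 \<in> lspan S" unfolding lspan_def by (intro CollectI exI[of _ "{}"]) auto
  with add sm show ?thesis by (auto simp: subsp_def)
qed

lemma lspan_sup: "x \<in> S \<Longrightarrow> x \<in> lspan (S :: (_ \<Rightarrow> 'f::field) set)"
  unfolding lspan_def by (intro CollectI exI[of _ "{x}"] exI[of _ "\<lambda>_. 1"]) auto

lemma lspan_least: assumes "subsp V" "S \<subseteq> V" shows "lspan S \<subseteq> V"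
proof
  fix v assume "v \<in> lspan S"
  then obtain F c where F: "finite F" "F \<subseteq> S" "v = (\<Sum>s\<in>F. smul (c s) s)"
    by (auto simp: lspan_def)
  show "v \<in> V" unfolding F(3) using assms F by (intro subsp_sum subsp_smul) auto
qed

lemma lspan_mono: "S \<subseteq> T \<Longrightarrow> lspan S \<subseteq> lspan T"
  by (rule lspan_least[OF lspan_subsp]) (auto intro: lspan_sup)

lemma lspan_free: "S \<subseteq> free_space \<Longrightarrow> lspan S \<subseteq> free_space"
  by (rule lspan_least[OF subsp_free])

lemmas lspan_zero = subsp_zero[OF lspan_subsp]
lemmas lspan_add = subsp_add[OF lspan_subsp]
lemmas lspan_smul = subsp_smul[OF lspan_subsp]
lemmas lspan_diff = subsp_diff[OF lspan_subsp]
lemmas lspan_neg = subsp_neg[OF lspan_subsp]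
lemmas lspan_sum = subsp_sum[OF lspan_subsp]


definition linf :: "(('i \<Rightarrow> 'f::field) \<Rightarrow> ('j \<Rightarrow> 'f)) \<Rightarrow> bool" where
  "linf f \<longleftrightarrow> (\<forall>x\<in>free_space. \<forall>y\<in>free_space. f (x + y) = f x + f y)
      \<and> (\<forall>c. \<forall>x\<in>free_space. f (smul c x) = smul c (f x))"

lemma linfI:
  assumes "\<And>x y. x \<in> free_space \<Longrightarrow> y \<in> free_space \<Longrightarrow> f (x + y) = f x + f y"
    and "\<And>c x. x \<in> free_space \<Longrightarrow> f (smul c x) = smul c (f x)"
  shows "linf f"
  using assms by (auto simp: linf_def)

lemma linf_add: "linf f \<Longrightarrow> x \<in> free_space \<Longrightarrow> y \<in> free_space \<Longrightarrow> f (x + y) = f x + f y"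
  by (simp add: linf_def)
lemma linf_smul: "linf f \<Longrightarrow> x \<in> free_space \<Longrightarrow> f (smul c x) = smul c (f x)"
  by (simp add: linf_def)
lemma linf_zero: assumes "linf f" shows "f 0 = 0"
proof -
  have "f (0 + 0) = f 0 + f 0" using linf_add[OF assms] by blast
  then show ?thesis by simp
qed
lemma linf_neg: assumes "linf f" "x \<in> free_space" shows "f (- x) = - f x"
proof -
  have "smul (-1) x = - x" "smul (-1) (f x) = - f x" by (simp_all add: fun_eq_iff fun_app_simps)
  then show ?thesis using linf_smul[OF assms, of "-1"] by simp
qed
lemma linf_diff: assumes "linf f" "x \<in> free_space" "y \<in> free_space" shows "f (x - y) = f x - f y"
  using linf_add[OF assms(1,2), of "- y"] linf_neg[OF assms(1,3)] assms by auto
lemma linf_sum: assumes "linf f" "\<And>i. i \<in> S \<Longrightarrow> g i \<in> free_space"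
  shows "f (\<Sum>i\<in>S. g i) = (\<Sum>i\<in>S. f (g i))"
  using assms(2)
proof (induction S rule: infinite_finite_induct)
  case (infinite A) then show ?case using linf_zero[OF assms(1)] by simp
next
  case empty then show ?case using linf_zero[OF assms(1)] by simp
next
  case (insert x F)
  then show ?case by (simp add: linf_add[OF assms(1)] free_sum)
qed

lemma lin_span:
  assumes "linf f" "S \<subseteq> free_space" "subsp V" "\<And>s. s \<in> S \<Longrightarrow> f s \<in> V" "x \<in> lspan S"
  shows "f x \<in> V"
proof -
  from assms(5) obtain F c where F: "finite F" "F \<subseteq> S" "x = (\<Sum>s\<in>F. smul (c s) s)"
    by (auto simp: lspan_def)
  have Ff: "\<And>s. s \<in> F \<Longrightarrow> s \<in> free_space" using F assms(2) by auto
  have "f x = (\<Sum>s\<in>F. f (smul (c s) s))"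
    unfolding F(3) using Ff by (intro linf_sum[OF assms(1)]) auto
  also have "\<dots> = (\<Sum>s\<in>F. smul (c s) (f s))"
    using Ff by (intro sum.cong) (auto simp: linf_smul[OF assms(1)])
  also have "\<dots> \<in> V" using F assms by (intro subsp_sum subsp_smul) auto
  finally show ?thesis .
qed

lemma free_decomp: assumes "u \<in> free_space"
  shows "u = (\<Sum>i\<in>{i. u i \<noteq> 0}. smul (u i) (delta i :: _ \<Rightarrow> 'f::field))"
proof -
  have fin: "finite {i. u i \<noteq> 0}" using assms by (simp add: free_iff)
  show ?thesis
  proof (rule ext)
    fix j
    have "(\<Sum>i\<in>{i. u i \<noteq> 0}. smul (u i) (delta i :: _ \<Rightarrow> 'f)) j = (\<Sum>i\<in>{i. u i \<noteq> 0}. u i * delta i j)"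
      by (simp add: sum_fun_apply smul_apply)
    also have "\<dots> = (\<Sum>i\<in>{i. u i \<noteq> 0} \<inter> {j}. u i * delta i j)"
      by (rule sum.mono_neutral_right) (auto simp: fin delta_def)
    also have "\<dots> = u j" by (cases "u j = 0") (auto simp: delta_def)
    finally show "u j = (\<Sum>i\<in>{i. u i \<noteq> 0}. smul (u i) (delta i :: _ \<Rightarrow> 'f)) j" by simp
  qed
qed

lemma free_in_lspan: assumes u: "u \<in> free_space"
  shows "u \<in> lspan (range (delta :: 'i \<Rightarrow> 'i \<Rightarrow> 'f::field))"
proof -
  have eq: "u = (\<Sum>i\<in>{i. u i \<noteq> 0}. smul (u i) (delta i :: 'i \<Rightarrow> 'f))" by (rule free_decomp[OF u])
  have "(\<Sum>i\<in>{i. u i \<noteq> 0}. smul (u i) (delta i :: 'i \<Rightarrow> 'f)) \<in> lspan (range delta)"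
    by (intro lspan_sum lspan_smul lspan_sup) auto
  then show ?thesis using eq by metis
qed

lemma free_lspan: "(free_space :: ('i \<Rightarrow> 'f::field) set) = lspan (range delta)"
proof -
  have "range delta \<subseteq> (free_space :: ('i \<Rightarrow> 'f) set)" by auto
  then have "lspan (range delta) \<subseteq> (free_space :: ('i \<Rightarrow> 'f) set)" by (rule lspan_free)
  then show ?thesis using free_in_lspan by blast
qed

lemma lin_eq_free:
  fixes f g :: "('i \<Rightarrow> 'f::field) \<Rightarrow> ('j \<Rightarrow> 'f)"
  assumes "linf f" "linf g" "\<And>i. f (delta i) = g (delta i)" "u \<in> free_space"
  shows "f u = g u"
proof -
  define D where "D = (\<Sum>i\<in>{i. u i \<noteq> 0}. smul (u i) (delta i))"
  have u: "u = D" unfolding D_def by (rule free_decomp[OF assms(4)])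
  have "f D = (\<Sum>i\<in>{i. u i \<noteq> 0}. f (smul (u i) (delta i)))"
    unfolding D_def by (intro linf_sum[OF assms(1)]) auto
  also have "\<dots> = (\<Sum>i\<in>{i. u i \<noteq> 0}. g (smul (u i) (delta i)))"
    by (intro sum.cong refl) (simp add: linf_smul[OF assms(1)] linf_smul[OF assms(2)] assms(3))
  also have "\<dots> = g D"
    unfolding D_def by (intro linf_sum[OF assms(2), symmetric]) auto
  finally show ?thesis using u by simp
qed

section \<open>Linear extension\<close>

lemma lext_super: assumes "finite S" "{i. t i \<noteq> 0} \<subseteq> S"
  shows "lext \<phi> t = (\<Sum>i\<in>S. smul (t i) (\<phi> i :: _ \<Rightarrow> 'f::field))"
  unfolding lext_def by (rule sum.mono_neutral_left) (use assms in auto)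

lemma lext_infinite: "infinite {i. t i \<noteq> 0} \<Longrightarrow> lext \<phi> t = 0"
  by (simp add: lext_def)

lemma linf_lext: "linf (lext (\<phi> :: 'i \<Rightarrow> ('j \<Rightarrow> 'f::field)))"
proof (rule linfI)
  fix x y :: "'i \<Rightarrow> 'f" assume x: "x \<in> free_space" and y: "y \<in> free_space"
  let ?S = "{i. x i \<noteq> 0} \<union> {i. y i \<noteq> 0}"
  have fin: "finite ?S" using x y by (simp add: free_iff)
  have "lext \<phi> (x + y) = (\<Sum>i\<in>?S. smul ((x + y) i) (\<phi> i))"
    by (rule lext_super[OF fin]) (auto simp: fun_app_simps)
  also have "\<dots> = (\<Sum>i\<in>?S. smul (x i) (\<phi> i)) + (\<Sum>i\<in>?S. smul (y i) (\<phi> i))"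
    by (simp add: plus_fun_apply smul_add_left sum.distrib)
  also have "\<dots> = lext \<phi> x + lext \<phi> y"
    by (subst (1 2) lext_super[OF fin]) auto
  finally show "lext \<phi> (x + y) = lext \<phi> x + lext \<phi> y" .
next
  fix c :: 'f and x :: "'i \<Rightarrow> 'f" assume x: "x \<in> free_space"
  let ?S = "{i. x i \<noteq> 0}"
  have fin: "finite ?S" using x by (simp add: free_iff)
  have "lext \<phi> (smul c x) = (\<Sum>i\<in>?S. smul (smul c x i) (\<phi> i))"
    by (rule lext_super[OF fin]) (auto simp: fun_app_simps)
  also have "\<dots> = smul c (\<Sum>i\<in>?S. smul (x i) (\<phi> i))"
    by (simp add: smul_apply smul_sum smul_smul)
  also have "\<dots> = smul c (lext \<phi> x)" by (simp add: lext_def)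
  finally show "lext \<phi> (smul c x) = smul c (lext \<phi> x)" .
qed

lemma lext_delta[simp]: "lext \<phi> (delta i) = (\<phi> i :: _ \<Rightarrow> 'f::field)"
proof -
  have "lext \<phi> (delta i) = (\<Sum>j\<in>{i}. smul (delta i j) (\<phi> j))"
    by (rule lext_super) (auto simp: delta_def)
  then show ?thesis by (simp add: delta_def)
qed

lemma lext_in: assumes "subsp V" "\<And>i. t i \<noteq> 0 \<Longrightarrow> \<phi> i \<in> V" shows "lext \<phi> t \<in> V"
  unfolding lext_def using assms by (intro subsp_sum subsp_smul) auto

lemma lext_free[intro]: "(\<And>i. \<phi> i \<in> free_space) \<Longrightarrow> lext \<phi> t \<in> (free_space :: (_ \<Rightarrow> 'f::field) set)"
  by (rule lext_in[OF subsp_free]) auto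

lemma lext_cong: "(\<And>i. t i \<noteq> 0 \<Longrightarrow> \<phi> i = \<psi> i) \<Longrightarrow> lext \<phi> t = lext \<psi> t"
  unfolding lext_def by (rule sum.cong) auto

lemma lext_fadd: "lext (\<lambda>i. \<phi> i + \<psi> i) t = lext \<phi> t + lext \<psi> (t :: _ \<Rightarrow> 'f::field)"
  unfolding lext_def by (simp add: smul_add sum.distrib)
lemma lext_fsmul: "lext (\<lambda>i. smul c (\<phi> i)) t = smul c (lext \<phi> (t :: _ \<Rightarrow> 'f::field))"
  unfolding lext_def by (simp add: smul_sum smul_smul mult.commute)
lemma lext_fzero[simp]: "lext (\<lambda>i. 0) t = (0 :: _ \<Rightarrow> 'f::field)"
  unfolding lext_def by simp
lemma lext_fneg: "lext (\<lambda>i. - \<phi> i) t = - lext \<phi> (t :: _ \<Rightarrow> 'f::field)"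
  unfolding lext_def by (simp add: smul_neg sum_negf)
lemma lext_fdiff: "lext (\<lambda>i. \<phi> i - \<psi> i) t = lext \<phi> t - lext \<psi> (t :: _ \<Rightarrow> 'f::field)"
  using lext_fadd[of \<phi> "\<lambda>i. - \<psi> i" t] lext_fneg[of \<psi> t] by simp
lemma lext_fsum: "lext (\<lambda>i. \<Sum>b\<in>F. \<phi> b i) t = (\<Sum>b\<in>F. lext (\<phi> b) (t :: _ \<Rightarrow> 'f::field))"
  by (induction F rule: infinite_finite_induct) (simp_all add: lext_fadd)

lemma lext_commute:
  assumes "linf L" "\<And>i. \<phi> i \<in> free_space"
  shows "L (lext \<phi> t) = lext (\<lambda>i. L (\<phi> i)) (t :: _ \<Rightarrow> 'f::field)"
proof (cases "finite {i. t i \<noteq> 0}")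
  case True
  have "L (lext \<phi> t) = (\<Sum>i\<in>{i. t i \<noteq> 0}. L (smul (t i) (\<phi> i)))"
    unfolding lext_def using assms by (intro linf_sum) auto
  also have "\<dots> = lext (\<lambda>i. L (\<phi> i)) t"
    unfolding lext_def using assms by (intro sum.cong) (auto simp: linf_smul)
  finally show ?thesis .
next
  case False
  then show ?thesis using linf_zero[OF assms(1)] by (simp add: lext_infinite)
qed

lemma lext_L: assumes "linf L" "u \<in> free_space" shows "lext (\<lambda>a. L (delta a)) u = L u"
  by (rule lin_eq_free[OF linf_lext assms(1) _ assms(2)]) simp

lemma linf_id: "linf (\<lambda>x. x)" by (rule linfI) auto
lemma linf_const0: "linf (\<lambda>x. 0)" by (rule linfI) auto

lemma lext_delta_id: "u \<in> free_space \<Longrightarrow> lext delta u = (u :: _ \<Rightarrow> 'f::field)"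
  using lext_L[OF linf_id, of u] by simp

lemma linf_comp: assumes "linf f" "linf g" "\<And>x. x \<in> free_space \<Longrightarrow> g x \<in> free_space"
  shows "linf (\<lambda>x. f (g x))"
  using assms by (intro linfI) (auto simp: linf_add linf_smul)
lemma linf_plus: assumes "linf f" "linf g" shows "linf (\<lambda>x. f x + g x)"
  using assms by (intro linfI) (auto simp: linf_add linf_smul smul_add)
lemma linf_minus: assumes "linf f" "linf g" shows "linf (\<lambda>x. f x - g x)"
  using assms by (intro linfI) (auto simp: linf_add linf_smul smul_diff)
lemma linf_sumf: assumes "\<And>b. b \<in> F \<Longrightarrow> linf (f b)" shows "linf (\<lambda>x. \<Sum>b\<in>F. f b x)"
  using assms by (intro linfI) (auto simp: linf_add linf_smul smul_sum sum.distrib intro!: sum.cong)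
lemma linf_smulc: "linf (\<lambda>x. smul c (x :: _ \<Rightarrow> 'f::field))"
  by (intro linfI) (auto simp: smul_add smul_smul mult.commute)

lemma linf_ptens1: "linf (\<lambda>x. ptens x (g :: _ \<Rightarrow> 'f::field))"
  by (intro linfI) (auto simp: ptens_add1 ptens_smul1)
lemma linf_ptens2: "linf (\<lambda>x. ptens (g :: _ \<Rightarrow> 'f::field) x)"
  by (intro linfI) (auto simp: ptens_add2 ptens_smul2)
lemma linf_wedge1: "linf (\<lambda>x. wedge x (g :: _ \<Rightarrow> 'f::field))"
  by (intro linfI) (auto simp: wedge_def fun_eq_iff fun_app_simps algebra_simps add_divide_distrib diff_divide_distrib)
lemma linf_wedge2: "linf (\<lambda>x. wedge (g :: _ \<Rightarrow> 'f::field) x)"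
  by (intro linfI) (auto simp: wedge_def fun_eq_iff fun_app_simps algebra_simps add_divide_distrib diff_divide_distrib)
lemma linf_vee1: "linf (\<lambda>x. vee x (g :: _ \<Rightarrow> 'f::field))"
  by (intro linfI) (auto simp: vee_def fun_eq_iff fun_app_simps algebra_simps add_divide_distrib diff_divide_distrib)
lemma linf_vee2: "linf (\<lambda>x. vee (g :: _ \<Rightarrow> 'f::field) x)"
  by (intro linfI) (auto simp: vee_def fun_eq_iff fun_app_simps algebra_simps add_divide_distrib diff_divide_distrib)

lemma bilin_span:
  assumes V: "subsp V" and G: "G \<subseteq> free_space" and H: "H \<subseteq> free_space"
    and l1: "\<And>y. y \<in> free_space \<Longrightarrow> linf (\<lambda>x. B x y)"
    and l2: "\<And>x. x \<in> free_space \<Longrightarrow> linf (\<lambda>y. B x y)"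
    and gh: "\<And>g h. g \<in> G \<Longrightarrow> h \<in> H \<Longrightarrow> B g h \<in> V"
    and x: "x \<in> lspan G" and y: "y \<in> lspan H"
  shows "B x y \<in> V"
proof -
  have xf: "x \<in> free_space" using lspan_free[OF G] x by auto
  have "B x h \<in> V" if h: "h \<in> H" for h
    using lin_span[OF l1 G V _ x, of h] h H gh by auto
  then show ?thesis using lin_span[OF l2[OF xf] H V _ y] by auto
qed

lemma bilin_free:
  assumes V: "subsp V"
    and l1: "\<And>y. y \<in> free_space \<Longrightarrow> linf (\<lambda>x. B x y)"
    and l2: "\<And>x. x \<in> free_space \<Longrightarrow> linf (\<lambda>y. B x y)"
    and gh: "\<And>i j. B (delta i) (delta j) \<in> V"
    and x: "x \<in> free_space" and y: "y \<in> free_space"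
  shows "B x y \<in> V"
  by (rule bilin_span[OF V _ _ l1 l2, of "range delta" "range delta"])
     (use gh x y free_lspan in auto)

lemma lext_ptens_left: assumes "v \<in> free_space"
  shows "lext \<phi> (ptens (delta a) v) = lext (\<lambda>z. \<phi> (a, z)) (v :: _ \<Rightarrow> 'f::field)"
  by (rule lin_eq_free[OF linf_comp[OF linf_lext linf_ptens2] linf_lext _ assms])
     (auto simp: ptens_delta)

lemma lext_fubini: assumes "u \<in> free_space" "v \<in> free_space"
  shows "lext \<phi> (ptens u v) = lext (\<lambda>a. lext (\<lambda>z. \<phi> (a, z)) v) (u :: _ \<Rightarrow> 'f::field)"
  by (rule lin_eq_free[OF linf_comp[OF linf_lext linf_ptens1] linf_lext _ assms(1)])
     (use assms(2) in \<open>auto simp: lext_ptens_left\<close>)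

lemma lext_ptens_right: assumes "u \<in> free_space"
  shows "lext \<phi> (ptens u (delta z)) = lext (\<lambda>a. \<phi> (a, z)) (u :: _ \<Rightarrow> 'f::field)"
  using lext_fubini[OF assms free_delta, of \<phi> z] by simp

lemma lext_bil:
  assumes l1: "\<And>y. y \<in> free_space \<Longrightarrow> linf (\<lambda>x. B x y)"
    and l2: "\<And>x. x \<in> free_space \<Longrightarrow> linf (\<lambda>y. B x y)"
    and u: "u \<in> free_space" and v: "v \<in> free_space"
  shows "lext (\<lambda>(x, y). B (delta x) (delta y)) (ptens u v) = B u (v :: _ \<Rightarrow> 'f::field)"
proof -
  have "lext (\<lambda>(x, y). B (delta x) (delta y)) (ptens u v)
      = lext (\<lambda>a. lext (\<lambda>z. B (delta a) (delta z)) v) u"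
    by (simp add: lext_fubini[OF u v])
  also have "\<dots> = lext (\<lambda>a. B (delta a) v) u"
    using lext_L[OF l2 v] by simp
  also have "\<dots> = B u v" using lext_L[OF l1[OF v] u] .
  finally show ?thesis .
qed


lemma lin_rel_free: "lin_rel sc \<subseteq> (free_space :: ('v::ab_group_add \<Rightarrow> 'f::field) set)"
  unfolding lin_rel_def by auto

lemma tens_rel_free: "R1 \<subseteq> free_space \<Longrightarrow> R2 \<subseteq> free_space \<Longrightarrow> tens_rel R1 R2 \<subseteq> (free_space :: (_ \<Rightarrow> 'f::field) set)"
  unfolding tens_rel_def by auto

lemma T1: fixes w :: "'j \<Rightarrow> 'f::field" and r :: "'i \<Rightarrow> 'f" assumes R1: "R1 \<subseteq> free_space" and r: "r \<in> lspan R1" and w: "w \<in> free_space"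
  shows "ptens r w \<in> lspan (tens_rel R1 (R2 :: (_ \<Rightarrow> 'f::field) set))"
proof (rule bilin_span[OF lspan_subsp R1 _ _ _ _ r, of "range (delta :: 'j \<Rightarrow> 'j \<Rightarrow> 'f)"])
  show "range (delta :: 'j \<Rightarrow> 'j \<Rightarrow> 'f) \<subseteq> free_space" by auto
  show "w \<in> lspan (range delta)" using w free_lspan by blast
  show "linf (\<lambda>x. ptens x y)" for y by (rule linf_ptens1)
  show "linf (\<lambda>y. ptens x y)" for x by (rule linf_ptens2)
  fix g :: "'i \<Rightarrow> 'f" and h :: "'j \<Rightarrow> 'f" assume "g \<in> R1" "h \<in> range delta"
  then show "ptens g h \<in> lspan (tens_rel R1 R2)"
    by (intro lspan_sup) (auto simp: tens_rel_def)
qed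

lemma T2: fixes w :: "'j \<Rightarrow> 'f::field" and r :: "'i \<Rightarrow> 'f" assumes R2: "R2 \<subseteq> free_space" and r: "r \<in> lspan R2" and w: "w \<in> free_space"
  shows "ptens w r \<in> lspan (tens_rel (R1 :: (_ \<Rightarrow> 'f::field) set) R2)"
proof (rule bilin_span[OF lspan_subsp _ R2 _ _ _ _ r, of "range (delta :: 'j \<Rightarrow> 'j \<Rightarrow> 'f)"])
  show "range (delta :: 'j \<Rightarrow> 'j \<Rightarrow> 'f) \<subseteq> free_space" by auto
  show "w \<in> lspan (range delta)" using w free_lspan by blast
  show "linf (\<lambda>x. ptens x y)" for y by (rule linf_ptens1)
  show "linf (\<lambda>y. ptens x y)" for x by (rule linf_ptens2)
  fix g :: "'j \<Rightarrow> 'f" and h :: "'i \<Rightarrow> 'f" assume "g \<in> range delta" "h \<in> R2"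
  then show "ptens g h \<in> lspan (tens_rel R1 R2)"
    by (intro lspan_sup) (auto simp: tens_rel_def)
qed

lemma wedge_rel1: assumes "R \<subseteq> free_space" "r \<in> lspan R" "w \<in> free_space"
  shows "wedge r w \<in> lspan (tens_rel R (R :: (_ \<Rightarrow> 'f::field) set))"
  unfolding wedge_def using assms lspan_free[OF assms(1)]
  by (intro lspan_smul lspan_diff T1 T2) auto
lemma wedge_rel2: assumes "R \<subseteq> free_space" "r \<in> lspan R" "w \<in> free_space"
  shows "wedge w r \<in> lspan (tens_rel R (R :: (_ \<Rightarrow> 'f::field) set))"
  unfolding wedge_def using assms lspan_free[OF assms(1)]
  by (intro lspan_smul lspan_diff T1 T2) auto
lemma vee_rel1: assumes "R \<subseteq> free_space" "r \<in> lspan R" "w \<in> free_space"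
  shows "vee r w \<in> lspan (tens_rel R (R :: (_ \<Rightarrow> 'f::field) set))"
  unfolding vee_def using assms lspan_free[OF assms(1)]
  by (intro lspan_smul lspan_add T1 T2) auto
lemma vee_rel2: assumes "R \<subseteq> free_space" "r \<in> lspan R" "w \<in> free_space"
  shows "vee w r \<in> lspan (tens_rel R (R :: (_ \<Rightarrow> 'f::field) set))"
  unfolding vee_def using assms lspan_free[OF assms(1)]
  by (intro lspan_smul lspan_add T1 T2) auto

lemma lr_add: "delta (a + b) - delta a - delta b \<in> lspan (lin_rel (sc :: 'f::field \<Rightarrow> 'v::ab_group_add \<Rightarrow> 'v))"
  by (rule lspan_sup) (auto simp: lin_rel_def)
lemma lr_smul: "delta (sc c a) - smul c (delta a) \<in> lspan (lin_rel (sc :: 'f::field \<Rightarrow> 'v::ab_group_add \<Rightarrow> 'v))"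
  by (rule lspan_sup) (auto simp: lin_rel_def)
lemma lr_zero: "delta 0 \<in> lspan (lin_rel (sc :: 'f::field \<Rightarrow> 'v::ab_group_add \<Rightarrow> 'v))"
  using lspan_neg[OF lr_add[of 0 0 sc]] by simp
lemma lr_neg: "delta (- a) + delta a \<in> lspan (lin_rel (sc :: 'f::field \<Rightarrow> 'v::ab_group_add \<Rightarrow> 'v))"
proof -
  have "delta (- a + a) - delta (- a) - delta a \<in> lspan (lin_rel sc)" by (rule lr_add)
  then have "delta 0 - (delta (- a) + delta a) \<in> lspan (lin_rel sc)" by (simp add: algebra_simps)
  from lspan_diff[OF lr_zero this] show ?thesis by simp
qed

lemma lin_rel_map:
  fixes f :: "'v::ab_group_add \<Rightarrow> 'w::ab_group_add"
  assumes add: "\<And>a b. f (a + b) = f a + f b" and sc: "\<And>c a. f (sc c a) = sc' c (f a)"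
    and r: "r \<in> lspan (lin_rel (sc :: 'f::field \<Rightarrow> 'v \<Rightarrow> 'v))"
  shows "lext (\<lambda>a. delta (f a)) r \<in> lspan (lin_rel sc')"
proof (rule lin_span[OF linf_lext lin_rel_free lspan_subsp _ r])
  fix s assume "s \<in> lin_rel sc"
  then consider a b where "s = delta (a + b) - delta a - delta b"
    | c a where "s = delta (sc c a) - smul c (delta a)"
    unfolding lin_rel_def by blast
  then show "lext (\<lambda>a. delta (f a)) s \<in> lspan (lin_rel sc')"
  proof cases
    case 1
    then have "lext (\<lambda>a. delta (f a)) s = delta (f a + f b) - delta (f a) - delta (f b)"
      by (simp add: linf_diff[OF linf_lext] add)
    then show ?thesis using lr_add by metis
  next
    case 2
    then have "lext (\<lambda>a. delta (f a)) s = delta (sc' c (f a)) - smul c (delta (f a))"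
      by (simp add: linf_diff[OF linf_lext] linf_smul[OF linf_lext] sc)
    then show ?thesis using lr_smul by metis
  qed
qed

lemma rel_bil1:
  fixes h :: "'a::ab_group_add \<Rightarrow> 'b \<Rightarrow> 'c::ab_group_add" and v :: "'b \<Rightarrow> 'f::field"
  assumes add: "\<And>a a' b. h (a + a') b = h a b + h a' b"
    and sc: "\<And>c a b. h (s1 c a) b = s3 c (h a b)"
    and u: "u \<in> lspan (lin_rel (s1 :: 'f \<Rightarrow> 'a \<Rightarrow> 'a))" and v: "v \<in> free_space"
  shows "lext (\<lambda>(a, b). delta (h a b)) (ptens u v) \<in> lspan (lin_rel s3)"
proof (rule bilin_span[OF lspan_subsp lin_rel_free _ _ _ _ u, of "range (delta :: 'b \<Rightarrow> 'b \<Rightarrow> 'f)"])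
  show "v \<in> lspan (range delta)" using v free_lspan by blast
  fix g :: "'a \<Rightarrow> 'f" and h' :: "'b \<Rightarrow> 'f" assume g: "g \<in> lin_rel s1" and h': "h' \<in> range delta"
  then obtain b where hb: "h' = delta b" by auto
  have gf: "g \<in> free_space" using g lin_rel_free by blast
  have "lext (\<lambda>(a, b). delta (h a b)) (ptens g h') = lext (\<lambda>a. delta (h a b)) g"
    unfolding hb by (simp add: lext_ptens_right[OF gf])
  also have "\<dots> \<in> lspan (lin_rel s3)"
    by (rule lin_rel_map[where sc = s1]) (use add sc g in \<open>auto intro: lspan_sup\<close>)
  finally show "lext (\<lambda>(a, b). delta (h a b)) (ptens g h') \<in> lspan (lin_rel s3)" .
qed (auto intro: linf_comp[OF linf_lext] linf_ptens1 linf_ptens2)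

lemma rel_bil2:
  fixes h :: "'a \<Rightarrow> 'b::ab_group_add \<Rightarrow> 'c::ab_group_add" and u :: "'a \<Rightarrow> 'f::field"
  assumes add: "\<And>a b b'. h a (b + b') = h a b + h a b'"
    and sc: "\<And>c a b. h a (s2 c b) = s3 c (h a b)"
    and u: "u \<in> free_space" and v: "v \<in> lspan (lin_rel (s2 :: 'f \<Rightarrow> 'b \<Rightarrow> 'b))"
  shows "lext (\<lambda>(a, b). delta (h a b)) (ptens u v) \<in> lspan (lin_rel s3)"
proof (rule bilin_span[OF lspan_subsp _ lin_rel_free _ _ _ _ v, of "range (delta :: 'a \<Rightarrow> 'a \<Rightarrow> 'f)"])
  show "u \<in> lspan (range delta)" using u free_lspan by blast
  fix g :: "'a \<Rightarrow> 'f" and h' :: "'b \<Rightarrow> 'f" assume h': "g \<in> range delta" and g: "h' \<in> lin_rel s2"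
  then obtain a where hb: "g = delta a" by auto
  have gf: "h' \<in> free_space" using g lin_rel_free by blast
  have "lext (\<lambda>(a, b). delta (h a b)) (ptens g h') = lext (\<lambda>b. delta (h a b)) h'"
    unfolding hb by (simp add: lext_ptens_left[OF gf])
  also have "\<dots> \<in> lspan (lin_rel s3)"
    by (rule lin_rel_map[where sc = s2]) (use add sc g in \<open>auto intro: lspan_sup\<close>)
  finally show "lext (\<lambda>(a, b). delta (h a b)) (ptens g h') \<in> lspan (lin_rel s3)" .
qed (auto intro: linf_comp[OF linf_lext] linf_ptens1 linf_ptens2)

lemma wedge_dd: "wedge (delta i) (delta j) = smul (inverse 2) (delta (i, j) - (delta (j, i) :: _ \<Rightarrow> 'f::field))"
  by (simp add: wedge_def ptens_delta)
lemma vee_dd: "vee (delta i) (delta j) = smul (inverse 2) (delta (i, j) + (delta (j, i) :: _ \<Rightarrow> 'f::field))"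
  by (simp add: vee_def ptens_delta)

lemma lext_wedge_dd: "lext \<phi> (wedge (delta i) (delta j)) = smul (inverse 2) (\<phi> (i, j) - (\<phi> (j, i) :: _ \<Rightarrow> 'f::field))"
  by (simp add: wedge_dd linf_smul[OF linf_lext] linf_diff[OF linf_lext] free_diff)
lemma lext_vee_dd: "lext \<phi> (vee (delta i) (delta j)) = smul (inverse 2) (\<phi> (i, j) + (\<phi> (j, i) :: _ \<Rightarrow> 'f::field))"
  by (simp add: vee_dd linf_smul[OF linf_lext] linf_add[OF linf_lext] free_add)

lemma lext_anti:
  assumes two: "(2::'f::field) \<noteq> 0" and "\<phi> (j, i) = - (\<phi> (i, j) :: _ \<Rightarrow> 'f)"
  shows "lext \<phi> (wedge (delta i) (delta j)) = \<phi> (i, j)"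
  using two by (simp add: lext_wedge_dd assms(2) fun_eq_iff fun_app_simps field_simps)


section \<open>Lambda^2, S^2, Z_2\<close>

lemma Lam2_subsp: "subsp (Lam2 R)" unfolding Lam2_def by (rule lspan_subsp)
lemma Sym2_subsp: "subsp (Sym2 R)" unfolding Sym2_def by (rule lspan_subsp)

lemma Lam2_free: "R \<subseteq> free_space \<Longrightarrow> Lam2 R \<subseteq> (free_space :: (_ \<Rightarrow> 'f::field) set)"
  unfolding Lam2_def by (rule lspan_free) (use tens_rel_free in blast)
lemma Sym2_free: "R \<subseteq> free_space \<Longrightarrow> Sym2 R \<subseteq> (free_space :: (_ \<Rightarrow> 'f::field) set)"
  unfolding Sym2_def by (rule lspan_free) (use tens_rel_free in blast)

lemma wedge_Lam2: "v \<in> free_space \<Longrightarrow> w \<in> free_space \<Longrightarrow> wedge v w \<in> Lam2 (R :: (_ \<Rightarrow> 'f::field) set)"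
  unfolding Lam2_def by (rule lspan_sup) blast
lemma vee_Sym2: "v \<in> free_space \<Longrightarrow> w \<in> free_space \<Longrightarrow> vee v w \<in> Sym2 (R :: (_ \<Rightarrow> 'f::field) set)"
  unfolding Sym2_def by (rule lspan_sup) blast
lemma rel_Lam2: "lspan (tens_rel R R) \<subseteq> Lam2 (R :: (_ \<Rightarrow> 'f::field) set)"
  unfolding Lam2_def by (rule lspan_mono) blast
lemma rel_Sym2: "lspan (tens_rel R R) \<subseteq> Sym2 (R :: (_ \<Rightarrow> 'f::field) set)"
  unfolding Sym2_def by (rule lspan_mono) blast

lemma wedge_reduce:
  assumes f: "linf f" and V: "subsp V" and d: "\<And>i j. f (wedge (delta i) (delta j)) \<in> V"
    and v: "v \<in> free_space" and w: "w \<in> free_space"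
  shows "f (wedge v w) \<in> V"
  by (rule bilin_free[where B = "\<lambda>v w. f (wedge v w)", OF V _ _ d v w])
     (auto intro!: linf_comp[OF f] linf_wedge1 linf_wedge2)

lemma vee_reduce:
  assumes f: "linf f" and V: "subsp V" and d: "\<And>i j. f (vee (delta i) (delta j)) \<in> V"
    and v: "v \<in> free_space" and w: "w \<in> free_space"
  shows "f (vee v w) \<in> V"
  by (rule bilin_free[where B = "\<lambda>v w. f (vee v w)", OF V _ _ d v w])
     (auto intro!: linf_comp[OF f] linf_vee1 linf_vee2)

lemma lam_map:
  assumes R: "R \<subseteq> free_space" and f: "linf f" and V: "subsp V"
    and d: "\<And>i j. f (wedge (delta i) (delta j)) \<in> V"
    and r: "\<And>r. r \<in> tens_rel R R \<Longrightarrow> f r \<in> V"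
    and z: "z \<in> Lam2 R"
  shows "f z \<in> V"
proof (rule lin_span[OF f _ V _ z[unfolded Lam2_def]])
  show "{wedge v w |v w. v \<in> free_space \<and> w \<in> free_space} \<union> tens_rel R R \<subseteq> free_space"
    using tens_rel_free[OF R R] by auto
  fix s assume "s \<in> {wedge v w |v w. v \<in> free_space \<and> w \<in> free_space} \<union> tens_rel R R"
  then show "f s \<in> V" using wedge_reduce[OF f V d] r by auto
qed

lemma sym_map:
  assumes R: "R \<subseteq> free_space" and f: "linf f" and V: "subsp V"
    and d: "\<And>i j. f (vee (delta i) (delta j)) \<in> V"
    and r: "\<And>r. r \<in> tens_rel R R \<Longrightarrow> f r \<in> V"
    and z: "z \<in> Sym2 R"
  shows "f z \<in> V"
proof (rule lin_span[OF f _ V _ z[unfolded Sym2_def]])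
  show "{vee v w |v w. v \<in> free_space \<and> w \<in> free_space} \<union> tens_rel R R \<subseteq> free_space"
    using tens_rel_free[OF R R] by auto
  fix s assume "s \<in> {vee v w |v w. v \<in> free_space \<and> w \<in> free_space} \<union> tens_rel R R"
  then show "f s \<in> V" using vee_reduce[OF f V d] r by auto
qed

lemma rel_image_B:
  assumes R: "R \<subseteq> free_space"
    and l1: "\<And>y. y \<in> free_space \<Longrightarrow> linf (\<lambda>x. B x y)"
    and l2: "\<And>x. x \<in> free_space \<Longrightarrow> linf (\<lambda>y. B x y)"
    and BV: "\<And>r w. r \<in> R \<Longrightarrow> w \<in> free_space \<Longrightarrow> B r w \<in> V \<and> B w r \<in> V"
    and r: "r \<in> tens_rel R R"
  shows "lext (\<lambda>(x, y). B (delta x) (delta y)) r \<in> V"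
proof -
  from r consider r' j where "r' \<in> R" "r = ptens r' (delta j)" | i r' where "r' \<in> R" "r = ptens (delta i) r'"
    unfolding tens_rel_def by blast
  then show ?thesis
  proof cases
    case 1
    then have "lext (\<lambda>(x, y). B (delta x) (delta y)) r = B r' (delta j)"
      unfolding 1(2) by (intro lext_bil[where B = B, OF l1 l2]) (use R 1(1) in auto)
    then show ?thesis using BV[OF 1(1)] by auto
  next
    case 2
    then have "lext (\<lambda>(x, y). B (delta x) (delta y)) r = B (delta i) r'"
      unfolding 2(2) by (intro lext_bil[where B = B, OF l1 l2]) (use R 2(1) in auto)
    then show ?thesis using BV[OF 2(1)] by auto
  qed
qed

lemma lam_sym:
  assumes R: "R \<subseteq> free_space" and z: "z \<in> Lam2 R"
  shows "lext (\<lambda>(x, y). vee (delta x) (delta y)) z \<in> lspan (tens_rel R (R :: (_ \<Rightarrow> 'f::field) set))"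
proof (rule lam_map[OF R linf_lext lspan_subsp _ _ z])
  fix i j
  show "lext (\<lambda>(x, y). vee (delta x) (delta y)) (wedge (delta i) (delta j)) \<in> lspan (tens_rel R R)"
    by (simp add: lext_wedge_dd vee_swap[of "delta j"] lspan_zero)
next
  fix r assume r: "r \<in> tens_rel R R"
  show "lext (\<lambda>(x, y). vee (delta x) (delta y)) r \<in> lspan (tens_rel R R)"
    by (rule rel_image_B[OF R linf_vee1 linf_vee2 _ r])
       (use R in \<open>auto intro: vee_rel1 vee_rel2 lspan_sup\<close>)
qed

lemma lam_id:
  assumes two: "(2::'f::field) \<noteq> 0" and R: "R \<subseteq> free_space" and z: "z \<in> Lam2 R"
  shows "z - lext (\<lambda>(x, y). wedge (delta x) (delta y)) z \<in> lspan (tens_rel R (R :: (_ \<Rightarrow> 'f) set))"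
proof (rule lam_map[OF R linf_minus[OF linf_id linf_lext] lspan_subsp _ _ z])
  fix i j :: 'a
  have "wedge (delta i) (delta j) - lext (\<lambda>(x, y). wedge (delta x) (delta y)) (wedge (delta i) (delta j))
      = (0 :: _ \<Rightarrow> 'f)"
    using two by (simp add: lext_wedge_dd wedge_swap[of "delta j"] fun_eq_iff fun_app_simps field_simps)
  then show "wedge (delta i) (delta j) - lext (\<lambda>(x, y). wedge (delta x) (delta y)) (wedge (delta i) (delta j))
      \<in> lspan (tens_rel R R)" by (simp add: lspan_zero)
next
  fix r assume r: "r \<in> tens_rel R R"
  have "lext (\<lambda>(x, y). wedge (delta x) (delta y)) r \<in> lspan (tens_rel R R)"
    by (rule rel_image_B[OF R linf_wedge1 linf_wedge2 _ r])
       (use R in \<open>auto intro: wedge_rel1 wedge_rel2 lspan_sup\<close>)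
  then show "r - lext (\<lambda>(x, y). wedge (delta x) (delta y)) r \<in> lspan (tens_rel R R)"
    by (rule lspan_diff[OF lspan_sup[OF r]])
qed

lemma sym_id:
  assumes two: "(2::'f::field) \<noteq> 0" and R: "R \<subseteq> free_space" and z: "z \<in> Sym2 R"
  shows "z - lext (\<lambda>(x, y). vee (delta x) (delta y)) z \<in> lspan (tens_rel R (R :: (_ \<Rightarrow> 'f) set))"
proof (rule sym_map[OF R linf_minus[OF linf_id linf_lext] lspan_subsp _ _ z])
  fix i j :: 'a
  have "vee (delta i) (delta j) - lext (\<lambda>(x, y). vee (delta x) (delta y)) (vee (delta i) (delta j))
      = (0 :: _ \<Rightarrow> 'f)"
    using two by (simp add: lext_vee_dd vee_swap[of "delta j"] fun_eq_iff fun_app_simps field_simps)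
  then show "vee (delta i) (delta j) - lext (\<lambda>(x, y). vee (delta x) (delta y)) (vee (delta i) (delta j))
      \<in> lspan (tens_rel R R)" by (simp add: lspan_zero)
next
  fix r assume r: "r \<in> tens_rel R R"
  have "lext (\<lambda>(x, y). vee (delta x) (delta y)) r \<in> lspan (tens_rel R R)"
    by (rule rel_image_B[OF R linf_vee1 linf_vee2 _ r])
       (use R in \<open>auto intro: vee_rel1 vee_rel2 lspan_sup\<close>)
  then show "r - lext (\<lambda>(x, y). vee (delta x) (delta y)) r \<in> lspan (tens_rel R R)"
    by (rule lspan_diff[OF lspan_sup[OF r]])
qed

lemma Z2_subsp: assumes R: "R \<subseteq> free_space" shows "subsp (Z2 R (brk :: _ \<Rightarrow> (_ \<Rightarrow> 'f::field)))"
proof -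
  have F: "Lam2 R \<subseteq> free_space" by (rule Lam2_free[OF R])
  have z: "lext brk 0 = 0" by (rule linf_zero[OF linf_lext])
  show ?thesis unfolding subsp_def Z2_def
    using F subsp_zero[OF Lam2_subsp] lspan_zero
    by (auto simp: z simp: linf_add[OF linf_lext] linf_smul[OF linf_lext] subsp_add[OF Lam2_subsp]
        subsp_smul[OF Lam2_subsp] lspan_add lspan_smul subset_iff)
qed

lemma Z2_free: "R \<subseteq> free_space \<Longrightarrow> Z2 R brk \<subseteq> (free_space :: (_ \<Rightarrow> 'f::field) set)"
  using Lam2_free unfolding Z2_def by blast


lemma lext_quad:
  fixes M :: "('a \<Rightarrow> 'f::field) \<Rightarrow> ('x \<Rightarrow> 'f) \<Rightarrow> ('a \<Rightarrow> 'f) \<Rightarrow> ('x \<Rightarrow> 'f) \<Rightarrow> ('z \<Rightarrow> 'f)"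
  assumes l1: "\<And>v u' v'. v \<in> free_space \<Longrightarrow> u' \<in> free_space \<Longrightarrow> v' \<in> free_space \<Longrightarrow> linf (\<lambda>u. M u v u' v')"
    and l2: "\<And>u u' v'. u \<in> free_space \<Longrightarrow> u' \<in> free_space \<Longrightarrow> v' \<in> free_space \<Longrightarrow> linf (\<lambda>v. M u v u' v')"
    and l3: "\<And>u v v'. u \<in> free_space \<Longrightarrow> v \<in> free_space \<Longrightarrow> v' \<in> free_space \<Longrightarrow> linf (\<lambda>u'. M u v u' v')"
    and l4: "\<And>u v u'. u \<in> free_space \<Longrightarrow> v \<in> free_space \<Longrightarrow> u' \<in> free_space \<Longrightarrow> linf (\<lambda>v'. M u v u' v')"
    and u: "u \<in> free_space" and v: "v \<in> free_space" and u': "u' \<in> free_space" and v': "v' \<in> free_space"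
  shows "lext (\<lambda>((a, x), (b, y)). M (delta a) (delta x) (delta b) (delta y)) (ptens (ptens u v) (ptens u' v'))
    = M u v u' v'"
proof -
  let ?\<phi> = "\<lambda>((a, x), (b, y)). M (delta a) (delta x) (delta b) (delta y)"
  have inner: "lext (\<lambda>j. ?\<phi> (i, j)) (ptens u' v') = (case i of (a, x) \<Rightarrow> M (delta a) (delta x) u' v')" for i
  proof (cases i)
    case (Pair a x)
    have eq: "(\<lambda>j. ?\<phi> (i, j)) = (\<lambda>(b, y). M (delta a) (delta x) (delta b) (delta y))"
      by (auto simp: Pair fun_eq_iff)
    show ?thesis unfolding eq Pair
      by (simp, rule lext_bil[where B = "M (delta a) (delta x)"]) (auto intro: l3 l4 u' v')
  qed
  have "lext ?\<phi> (ptens (ptens u v) (ptens u' v')) = lext (\<lambda>i. lext (\<lambda>j. ?\<phi> (i, j)) (ptens u' v')) (ptens u v)"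
    by (rule lext_fubini) (auto simp: u v u' v')
  also have "\<dots> = lext (\<lambda>(a, x). M (delta a) (delta x) u' v') (ptens u v)"
    by (simp only: inner)
  also have "\<dots> = M u v u' v'"
    by (rule lext_bil[where B = "\<lambda>p q. M p q u' v'"]) (auto intro: l1 l2 u v u' v')
  finally show ?thesis .
qed

locale L21 =
  fixes sA :: "'f::field \<Rightarrow> 'a::ab_group_add \<Rightarrow> 'a"
    and mA :: "'a \<Rightarrow> 'a \<Rightarrow> 'a" and oneA :: 'a
    and sK :: "'f \<Rightarrow> 'k::ab_group_add \<Rightarrow> 'k"
    and brK :: "'k \<Rightarrow> 'k \<Rightarrow> 'k"
  assumes two: "(2::'f) \<noteq> 0"
    and vsA: "vector_space sA"
    and mA_add1: "\<And>a b c. mA (a + b) c = mA a c + mA b c"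
    and mA_add2: "\<And>a b c. mA a (b + c) = mA a b + mA a c"
    and mA_scale1: "\<And>r a b. mA (sA r a) b = sA r (mA a b)"
    and mA_scale2: "\<And>r a b. mA a (sA r b) = sA r (mA a b)"
    and mA_comm: "\<And>a b. mA a b = mA b a"
    and mA_unit: "\<And>a. mA oneA a = a"
    and br_add1: "\<And>x y z. brK (x + y) z = brK x z + brK y z"
    and br_add2: "\<And>x y z. brK x (y + z) = brK x y + brK x z"
    and br_scale1: "\<And>r x y. brK (sK r x) y = sK r (brK x y)"
    and br_scale2: "\<And>r x y. brK x (sK r y) = sK r (brK x y)"
    and br_alt: "\<And>x. brK x x = 0"
begin

abbreviation "RA \<equiv> (lin_rel sA :: ('a \<Rightarrow> 'f) set)"
abbreviation "RK \<equiv> (lin_rel sK :: ('k \<Rightarrow> 'f) set)"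
abbreviation "Rg \<equiv> (g_rel sA sK :: ('a \<times> 'k \<Rightarrow> 'f) set)"
abbreviation "TA \<equiv> tens_rel RA RA"
abbreviation "TK \<equiv> tens_rel RK RK"
abbreviation "N1 \<equiv> lspan (tens_rel TA TK)"
abbreviation "N2 \<equiv> lspan (tens_rel RA TK)"
abbreviation "gbr \<equiv> (g_br mA brK :: _ \<Rightarrow> ('a \<times> 'k \<Rightarrow> 'f))"
abbreviation "brk \<equiv> ((\<lambda>(x, y). delta (brK x y)) :: _ \<Rightarrow> ('k \<Rightarrow> 'f))"
abbreviation "mm \<equiv> ((\<lambda>(a, b). delta (mA a b)) :: _ \<Rightarrow> ('a \<Rightarrow> 'f))"
abbreviation "P1 \<equiv> lext (p1 :: _ \<Rightarrow> (_ \<Rightarrow> 'f))"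
abbreviation "P2 \<equiv> lext (p2 mA :: _ \<Rightarrow> (_ \<Rightarrow> 'f))"
abbreviation "P3 \<equiv> lext (p3 mA oneA :: _ \<Rightarrow> (_ \<Rightarrow> 'f))"
abbreviation "W1 \<equiv> lspan ({ptens u v | u v. u \<in> Lam2 RA \<and> v \<in> Sym2 RK} \<union> tens_rel TA TK)"
abbreviation "W2 \<equiv> lspan ({ptens u z | u z. u \<in> free_space \<and> z \<in> Z2 RK brk} \<union> tens_rel RA TK)"
abbreviation "W3 \<equiv> lspan ({ptens i w | i w. i \<in> I_A sA mA \<and> w \<in> Lam2 RK} \<union> tens_rel TA TK)"

lemma four: "(4::'f) \<noteq> 0"
proof -
  have "(2::'f) * 2 \<noteq> 0" using two by (simp only: mult_eq_0_iff) simp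
  then show ?thesis by simp
qed
lemma eight: "(8::'f) \<noteq> 0"
proof -
  have "(2::'f) * 4 \<noteq> 0" using two four by (simp only: mult_eq_0_iff) simp
  then show ?thesis by simp
qed

lemma RA_free: "RA \<subseteq> free_space" by (rule lin_rel_free)
lemma RK_free: "RK \<subseteq> free_space" by (rule lin_rel_free)
lemma TA_free: "TA \<subseteq> free_space" by (intro tens_rel_free RA_free)
lemma TK_free: "TK \<subseteq> free_space" by (intro tens_rel_free RK_free)
lemma Rg_free: "Rg \<subseteq> free_space" unfolding g_rel_def by (intro tens_rel_free RA_free RK_free)

lemma N1_W1: "N1 \<subseteq> W1" by (rule lspan_mono) blast
lemma N2_W2: "N2 \<subseteq> W2" by (rule lspan_mono) blast
lemma N1_W3: "N1 \<subseteq> W3" by (rule lspan_mono) blast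

definition mulA :: "('a \<Rightarrow> 'f) \<Rightarrow> ('a \<Rightarrow> 'f) \<Rightarrow> ('a \<Rightarrow> 'f)" where
  "mulA u u' = lext mm (ptens u u')"

lemma mulA_dd: "mulA (delta a) (delta b) = delta (mA a b)"
  by (simp add: mulA_def ptens_delta)

lemma mulA_free[simp]: "mulA u u' \<in> free_space"
  unfolding mulA_def by (rule lext_free) (auto split: prod.split)

lemma linf_mulA1: "u' \<in> free_space \<Longrightarrow> linf (\<lambda>u. mulA u u')"
  unfolding mulA_def by (rule linf_comp[OF linf_lext linf_ptens1]) auto
lemma linf_mulA2: "u \<in> free_space \<Longrightarrow> linf (\<lambda>u'. mulA u u')"
  unfolding mulA_def by (rule linf_comp[OF linf_lext linf_ptens2]) auto

lemma mulA_rel1: "u \<in> lspan RA \<Longrightarrow> u' \<in> free_space \<Longrightarrow> mulA u u' \<in> lspan RA"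
  unfolding mulA_def by (rule rel_bil1[where ?s1.0 = sA and ?s3.0 = sA]) (auto simp: mA_add1 mA_scale1)
lemma mulA_rel2: "u \<in> free_space \<Longrightarrow> u' \<in> lspan RA \<Longrightarrow> mulA u u' \<in> lspan RA"
  unfolding mulA_def by (rule rel_bil2[where ?s2.0 = sA and ?s3.0 = sA]) (auto simp: mA_add2 mA_scale2)

definition M1 :: "('a \<Rightarrow> 'f) \<Rightarrow> ('k \<Rightarrow> 'f) \<Rightarrow> ('a \<Rightarrow> 'f) \<Rightarrow> ('k \<Rightarrow> 'f) \<Rightarrow> (('a \<times> 'a) \<times> ('k \<times> 'k) \<Rightarrow> 'f)" where
  "M1 u v u' v' = ptens (wedge u u') (vee v v')"
definition M3 :: "('a \<Rightarrow> 'f) \<Rightarrow> ('k \<Rightarrow> 'f) \<Rightarrow> ('a \<Rightarrow> 'f) \<Rightarrow> ('k \<Rightarrow> 'f) \<Rightarrow> (('a \<times> 'a) \<times> ('k \<times> 'k) \<Rightarrow> 'f)" where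
  "M3 u v u' v' = ptens (vee u u' - vee (mulA u u') (delta oneA)) (wedge v v')"

lemma p1_M1: "(p1 :: _ \<Rightarrow> (_ \<Rightarrow> 'f)) = (\<lambda>((a, x), (b, y)). M1 (delta a) (delta x) (delta b) (delta y))"
  by (simp add: p1_def M1_def)
lemma p3_M3: "(p3 mA oneA :: _ \<Rightarrow> (_ \<Rightarrow> 'f)) = (\<lambda>((a, x), (b, y)). M3 (delta a) (delta x) (delta b) (delta y))"
  by (simp add: p3_def M3_def mulA_dd)

lemma P1_quad:
  assumes "u \<in> free_space" "v \<in> free_space" "u' \<in> free_space" "v' \<in> free_space"
  shows "P1 (ptens (ptens u v) (ptens u' v')) = M1 u v u' v'"
  unfolding p1_M1
  by (rule lext_quad[where M = M1]) (auto simp: assms M1_def intro!: linf_comp[OF linf_ptens1]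
      linf_comp[OF linf_ptens2] linf_wedge1 linf_wedge2 linf_vee1 linf_vee2)

lemma P3_quad:
  assumes "u \<in> free_space" "v \<in> free_space" "u' \<in> free_space" "v' \<in> free_space"
  shows "P3 (ptens (ptens u v) (ptens u' v')) = M3 u v u' v'"
  unfolding p3_M3
  by (rule lext_quad[where M = M3]) (auto simp: assms M3_def intro!: linf_comp[OF linf_ptens1]
      linf_comp[OF linf_ptens2] linf_wedge1 linf_wedge2 linf_minus linf_vee1 linf_vee2 linf_const0
      linf_comp[OF linf_vee1 linf_mulA1] linf_comp[OF linf_vee1 linf_mulA2])


lemma M1_rel:
  assumes f: "u \<in> free_space" "v \<in> free_space" "u' \<in> free_space" "v' \<in> free_space"
    and c: "u \<in> lspan RA \<or> u' \<in> lspan RA \<or> v \<in> lspan RK \<or> v' \<in> lspan RK"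
  shows "M1 u v u' v' \<in> N1"
  unfolding M1_def using c
proof (elim disjE)
  assume "u \<in> lspan RA"
  then have "wedge u u' \<in> lspan TA" by (rule wedge_rel1[OF RA_free _ f(3)])
  then show "ptens (wedge u u') (vee v v') \<in> N1" by (rule T1[OF TA_free]) (simp add: f)
next
  assume "u' \<in> lspan RA"
  then have "wedge u u' \<in> lspan TA" by (rule wedge_rel2[OF RA_free _ f(1)])
  then show "ptens (wedge u u') (vee v v') \<in> N1" by (rule T1[OF TA_free]) (simp add: f)
next
  assume "v \<in> lspan RK"
  then have "vee v v' \<in> lspan TK" by (rule vee_rel1[OF RK_free _ f(4)])
  then show "ptens (wedge u u') (vee v v') \<in> N1" by (rule T2[OF TK_free]) (simp add: f)
next
  assume "v' \<in> lspan RK"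
  then have "vee v v' \<in> lspan TK" by (rule vee_rel2[OF RK_free _ f(2)])
  then show "ptens (wedge u u') (vee v v') \<in> N1" by (rule T2[OF TK_free]) (simp add: f)
qed

lemma M3_rel:
  assumes f: "u \<in> free_space" "v \<in> free_space" "u' \<in> free_space" "v' \<in> free_space"
    and c: "u \<in> lspan RA \<or> u' \<in> lspan RA \<or> v \<in> lspan RK \<or> v' \<in> lspan RK"
  shows "M3 u v u' v' \<in> N1"
  unfolding M3_def using c
proof (elim disjE)
  assume u: "u \<in> lspan RA"
  have "vee u u' \<in> lspan TA" by (rule vee_rel1[OF RA_free u f(3)])
  moreover have "vee (mulA u u') (delta oneA) \<in> lspan TA"
    by (rule vee_rel1[OF RA_free mulA_rel1[OF u f(3)]]) simp
  ultimately have "vee u u' - vee (mulA u u') (delta oneA) \<in> lspan TA" by (rule lspan_diff)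
  then show "ptens (vee u u' - vee (mulA u u') (delta oneA)) (wedge v v') \<in> N1"
    by (rule T1[OF TA_free]) (simp add: f)
next
  assume u: "u' \<in> lspan RA"
  have "vee u u' \<in> lspan TA" by (rule vee_rel2[OF RA_free u f(1)])
  moreover have "vee (mulA u u') (delta oneA) \<in> lspan TA"
    by (rule vee_rel1[OF RA_free mulA_rel2[OF f(1) u]]) simp
  ultimately have "vee u u' - vee (mulA u u') (delta oneA) \<in> lspan TA" by (rule lspan_diff)
  then show "ptens (vee u u' - vee (mulA u u') (delta oneA)) (wedge v v') \<in> N1"
    by (rule T1[OF TA_free]) (simp add: f)
next
  assume "v \<in> lspan RK"
  then have "wedge v v' \<in> lspan TK" by (rule wedge_rel1[OF RK_free _ f(4)])
  then show "ptens (vee u u' - vee (mulA u u') (delta oneA)) (wedge v v') \<in> N1"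
    by (rule T2[OF TK_free]) (simp add: f)
next
  assume "v' \<in> lspan RK"
  then have "wedge v v' \<in> lspan TK" by (rule wedge_rel2[OF RK_free _ f(2)])
  then show "ptens (vee u u' - vee (mulA u u') (delta oneA)) (wedge v v') \<in> N1"
    by (rule T2[OF TK_free]) (simp add: f)
qed

lemma quad_rel:
  assumes f: "u \<in> free_space" "v \<in> free_space" "u' \<in> free_space" "v' \<in> free_space"
    and c: "u \<in> lspan RA \<or> u' \<in> lspan RA \<or> v \<in> lspan RK \<or> v' \<in> lspan RK"
  shows "P1 (ptens (ptens u v) (ptens u' v')) \<in> N1 \<and> P3 (ptens (ptens u v) (ptens u' v')) \<in> N1"
  using M1_rel[OF f c] M3_rel[OF f c] by (simp add: P1_quad[OF f] P3_quad[OF f])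

lemma P13_rel:
  assumes e: "e \<in> tens_rel Rg Rg"
  shows "P1 e \<in> N1 \<and> P3 e \<in> N1"
proof -
  have RAf: "\<And>r. r \<in> RA \<Longrightarrow> r \<in> free_space" and RKf: "\<And>r. r \<in> RK \<Longrightarrow> r \<in> free_space"
    using RA_free RK_free by auto
  have dd: "(delta (p, q) :: _ \<Rightarrow> 'f) = ptens (delta p) (delta q)" for p q
    by (simp add: ptens_delta)
  from e consider r j where "r \<in> Rg" "e = ptens r (delta j)" | i r where "r \<in> Rg" "e = ptens (delta i) r"
    unfolding tens_rel_def by blast
  then show ?thesis
  proof cases
    case 1
    obtain b y where j: "j = (b, y)" by (cases j)
    from 1(1) consider r' x where "r' \<in> RA" "r = ptens r' (delta x)" | a r' where "r' \<in> RK" "r = ptens (delta a) r'"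
      unfolding g_rel_def tens_rel_def by blast
    then show ?thesis
    proof cases
      case 1
      then show ?thesis using \<open>e = _\<close> j
        by (simp add: dd) (rule quad_rel; use 1 RAf lspan_sup in auto)
    next
      case 2
      then show ?thesis using \<open>e = _\<close> j
        by (simp add: dd) (rule quad_rel; use 2 RKf lspan_sup in auto)
    qed
  next
    case 2
    obtain a x where i: "i = (a, x)" by (cases i)
    from 2(1) consider r' y where "r' \<in> RA" "r = ptens r' (delta y)" | b r' where "r' \<in> RK" "r = ptens (delta b) r'"
      unfolding g_rel_def tens_rel_def by blast
    then show ?thesis
    proof cases
      case 1
      then show ?thesis using \<open>e = _\<close> i
        by (simp add: dd) (rule quad_rel; use 1 RAf lspan_sup in auto)
    next
      case 2
      then show ?thesis using \<open>e = _\<close> i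
        by (simp add: dd) (rule quad_rel; use 2 RKf lspan_sup in auto)
    qed
  qed
qed

lemma p1_anti: "(p1 (j, i) :: _ \<Rightarrow> 'f) = - p1 (i, j)"
proof -
  obtain a x b y where ij: "i = (a, x)" "j = (b, y)" by (cases i, cases j)
  show ?thesis by (simp add: ij p1_def wedge_swap[of "delta b" "delta a"] vee_swap[of "delta y" "delta x"] ptens_neg1)
qed

lemma p2_anti: "(p2 mA (j, i) :: _ \<Rightarrow> 'f) = - p2 mA (i, j)"
proof -
  obtain a x b y where ij: "i = (a, x)" "j = (b, y)" by (cases i, cases j)
  show ?thesis by (simp add: ij p2_def wedge_swap[of "delta y" "delta x"] mA_comm[of b a] ptens_neg2)
qed

lemma p3_anti: "(p3 mA oneA (j, i) :: _ \<Rightarrow> 'f) = - p3 mA oneA (i, j)"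
proof -
  obtain a x b y where ij: "i = (a, x)" "j = (b, y)" by (cases i, cases j)
  show ?thesis by (simp add: ij p3_def wedge_swap[of "delta y" "delta x"] vee_swap[of "delta b" "delta a"]
      mA_comm[of b a] ptens_neg2)
qed

lemma P1_wedge: "P1 (wedge (delta i) (delta j)) = p1 (i, j)"
  by (rule lext_anti[OF two]) (rule p1_anti)
lemma P2_wedge: "P2 (wedge (delta i) (delta j)) = p2 mA (i, j)"
  by (rule lext_anti[OF two]) (rule p2_anti)
lemma P3_wedge: "P3 (wedge (delta i) (delta j)) = p3 mA oneA (i, j)"
  by (rule lext_anti[OF two]) (rule p3_anti)

lemma P1_sub: assumes t: "t \<in> Lam2 Rg" shows "P1 t \<in> W1"
proof (rule lam_map[OF Rg_free linf_lext lspan_subsp _ _ t])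
  fix i j :: "'a \<times> 'k"
  obtain a x b y where ij: "i = (a, x)" "j = (b, y)" by (cases i, cases j)
  have A: "wedge (delta a) (delta b) \<in> Lam2 RA" by (rule wedge_Lam2) auto
  have B: "vee (delta x) (delta y) \<in> Sym2 RK" by (rule vee_Sym2) auto
  have "P1 (wedge (delta i) (delta j)) = p1 (i, j)" by (rule P1_wedge)
  also have "\<dots> = ptens (wedge (delta a) (delta b)) (vee (delta x) (delta y))"
    by (simp add: ij p1_def)
  also have "\<dots> \<in> W1" by (rule lspan_sup) (use A B in blast)
  finally show "P1 (wedge (delta i) (delta j)) \<in> W1" .
next
  fix r assume "r \<in> tens_rel Rg Rg"
  then show "P1 r \<in> W1" using P13_rel N1_W1 by blast
qed

lemma D_IA: "vee (delta a) (delta b) - vee (delta (mA a b)) (delta oneA) \<in> I_A sA mA"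
proof -
  have "vee (delta a) (delta b) - vee (delta (mA a b)) (delta oneA) \<in> Sym2 RA"
    by (intro subsp_diff[OF Sym2_subsp] vee_Sym2) auto
  moreover have "lext mm (vee (delta a) (delta b) - vee (delta (mA a b)) (delta oneA)) = 0"
    by (simp add: linf_diff[OF linf_lext] lext_vee_dd mA_comm[of "mA a b" oneA] mA_unit mA_comm[of b a])
  ultimately show ?thesis unfolding I_A_def using lspan_zero by auto
qed

lemma P3_sub: assumes t: "t \<in> Lam2 Rg" shows "P3 t \<in> W3"
proof (rule lam_map[OF Rg_free linf_lext lspan_subsp _ _ t])
  fix i j :: "'a \<times> 'k"
  obtain a x b y where ij: "i = (a, x)" "j = (b, y)" by (cases i, cases j)
  have A: "vee (delta a) (delta b) - vee (delta (mA a b)) (delta oneA) \<in> I_A sA mA" by (rule D_IA)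
  have B: "wedge (delta x) (delta y) \<in> Lam2 RK" by (rule wedge_Lam2) auto
  have "P3 (wedge (delta i) (delta j)) = p3 mA oneA (i, j)" by (rule P3_wedge)
  also have "\<dots> = ptens (vee (delta a) (delta b) - vee (delta (mA a b)) (delta oneA)) (wedge (delta x) (delta y))"
    by (simp add: ij p3_def)
  also have "\<dots> \<in> W3" by (rule lspan_sup) (use A B in blast)
  finally show "P3 (wedge (delta i) (delta j)) \<in> W3" .
next
  fix r assume "r \<in> tens_rel Rg Rg"
  then show "P3 r \<in> W3" using P13_rel N1_W3 by blast
qed


section \<open>Coefficients with respect to a basis of A\<close>

definition coefP :: "('a \<Rightarrow> 'a \<Rightarrow> 'f) \<Rightarrow> bool" where
  "coefP c \<longleftrightarrow> (\<forall>a. finite {b. c a b \<noteq> 0}) \<and> (\<forall>a. (\<Sum>b\<in>{b. c a b \<noteq> 0}. sA (c a b) b) = a)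
     \<and> (\<forall>x y b. c (x + y) b = c x b + c y b) \<and> (\<forall>r x b. c (sA r x) b = r * c x b)"

lemma coef_exists: "\<exists>c. coefP c"
proof -
  interpret vs: vector_space sA by (rule vsA)
  define B where "B = vs.extend_basis {}"
  have ind: "vs.independent B" unfolding B_def by (rule vs.independent_extend_basis[OF vs.independent_empty])
  have sp: "vs.span B = UNIV" unfolding B_def by (rule vs.span_extend_basis[OF vs.independent_empty])
  have "coefP (\<lambda>a b. vs.representation B a b)"
    unfolding coefP_def
  proof (intro conjI allI)
    fix a show "finite {b. vs.representation B a b \<noteq> 0}" by (rule vs.finite_representation)
    show "(\<Sum>b\<in>{b. vs.representation B a b \<noteq> 0}. sA (vs.representation B a b) b) = a"
      by (rule vs.sum_nonzero_representation_eq[OF ind]) (simp add: sp)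
  next
    fix x y b show "vs.representation B (x + y) b = vs.representation B x b + vs.representation B y b"
      using vs.representation_add[OF ind, of y x] sp by simp
  next
    fix r x b show "vs.representation B (sA r x) b = r * vs.representation B x b"
      using vs.representation_scale[OF ind, of x r] sp by simp
  qed
  then show ?thesis by blast
qed

definition coef :: "'a \<Rightarrow> 'a \<Rightarrow> 'f" where "coef = (SOME c. coefP c)"

lemma coefP_coef: "coefP coef"
  unfolding coef_def using coef_exists by (rule someI_ex)

lemma coef_fin: "finite {b. coef a b \<noteq> 0}" using coefP_coef by (simp add: coefP_def)
lemma coef_sum: "(\<Sum>b\<in>{b. coef a b \<noteq> 0}. sA (coef a b) b) = a" using coefP_coef by (simp add: coefP_def)
lemma coef_add: "coef (x + y) b = coef x b + coef y b" using coefP_coef by (simp add: coefP_def)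
lemma coef_scale: "coef (sA r x) b = r * coef x b" using coefP_coef by (simp add: coefP_def)

lemma sA_zero: "sA 0 x = 0"
proof -
  interpret vs: vector_space sA by (rule vsA)
  show ?thesis by simp
qed

lemma coef_sum_F: assumes "finite F" "{b. coef a b \<noteq> 0} \<subseteq> F"
  shows "(\<Sum>b\<in>F. sA (coef a b) b) = a"
proof -
  have "(\<Sum>b\<in>F. sA (coef a b) b) = (\<Sum>b\<in>{b. coef a b \<noteq> 0}. sA (coef a b) b)"
    by (rule sum.mono_neutral_right) (use assms in \<open>auto simp: sA_zero\<close>)
  then show ?thesis by (simp add: coef_sum)
qed

definition phi :: "'a \<Rightarrow> ('a \<times> 'z \<Rightarrow> 'f) \<Rightarrow> ('z \<Rightarrow> 'f)" where
  "phi b u = lext (\<lambda>(a, z). smul (coef a b) (delta z)) u"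

lemma phi_eq: "phi b = lext (\<lambda>(a, z). smul (coef a b) (delta z))"
  by (rule ext) (simp add: phi_def)

lemma linf_phi: "linf (phi b)" unfolding phi_eq by (rule linf_lext)

lemma phi_free[simp]: "phi b u \<in> free_space"
  unfolding phi_def by (rule lext_free) (auto split: prod.split)

lemma phi_ptens_left: assumes w: "w \<in> free_space"
  shows "phi b (ptens (delta a) w) = smul (coef a b) w"
proof -
  have "phi b (ptens (delta a) w) = lext (\<lambda>z. smul (coef a b) (delta z)) w"
    unfolding phi_def by (simp add: lext_ptens_left[OF w])
  also have "\<dots> = smul (coef a b) w" by (rule lext_L[OF linf_smulc w])
  finally show ?thesis .
qed

lemma phi_delta: "phi b (delta (a, z)) = smul (coef a b) (delta z)"
  using phi_ptens_left[of "delta z" b a] by (simp add: ptens_delta)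

lemma phi_rel: assumes R: "R' \<subseteq> free_space" and u: "u \<in> lspan (tens_rel RA R')"
  shows "phi b u \<in> lspan R'"
proof (rule lin_span[OF linf_phi tens_rel_free[OF RA_free R] lspan_subsp _ u])
  fix s assume "s \<in> tens_rel RA R'"
  then consider r z where "r \<in> RA" "s = ptens r (delta z)" | a r where "r \<in> R'" "s = ptens (delta a) r"
    unfolding tens_rel_def by blast
  then show "phi b s \<in> lspan R'"
  proof cases
    case 1
    have rf: "r \<in> free_space" using 1(1) RA_free by blast
    have eq: "phi b s = lext (\<lambda>a. smul (coef a b) (delta z)) r"
      unfolding 1(2) phi_def by (simp add: lext_ptens_right[OF rf])
    from 1(1) consider a1 a2 where "r = delta (a1 + a2) - delta a1 - delta a2"
      | c a where "r = delta (sA c a) - smul c (delta a)"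
      unfolding lin_rel_def by blast
    then have "lext (\<lambda>a. smul (coef a b) (delta z)) r = 0"
    proof cases
      case 1
      then show ?thesis
        by (simp add: linf_diff[OF linf_lext] coef_add smul_add_left)
    next
      case 2
      then show ?thesis
        by (simp add: linf_diff[OF linf_lext] linf_smul[OF linf_lext] coef_scale smul_smul)
    qed
    then show ?thesis using eq lspan_zero by simp
  next
    case 2
    have rf: "r \<in> free_space" using 2(1) R by blast
    show ?thesis unfolding 2(2) phi_ptens_left[OF rf]
      by (intro lspan_smul lspan_sup 2(1))
  qed
qed

lemma delta_sumA: assumes "finite F"
  shows "delta (\<Sum>b\<in>F. sA (k b) b) - (\<Sum>b\<in>F. smul (k b) (delta b)) \<in> lspan RA"
  using assms
proof (induction F rule: finite_induct)
  case empty
  then show ?case using lr_zero by simp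
next
  case (insert x F)
  let ?S = "\<Sum>b\<in>F. sA (k b) b" and ?T = "\<Sum>b\<in>F. smul (k b) (delta b)"
  have "delta (sA (k x) x + ?S) - (smul (k x) (delta x) + ?T)
      = (delta (sA (k x) x + ?S) - delta (sA (k x) x) - delta ?S) + (delta (sA (k x) x) - smul (k x) (delta x))
        + (delta ?S - ?T)"
    by (simp add: algebra_simps)
  also have "\<dots> \<in> lspan RA"
    by (intro lspan_add lr_add lr_smul insert.IH)
  finally show ?case using insert.hyps by simp
qed

lemma delta_coef: assumes "finite F" "{b. coef a b \<noteq> 0} \<subseteq> F"
  shows "delta a - (\<Sum>b\<in>F. smul (coef a b) (delta b)) \<in> lspan RA"
  using delta_sumA[OF assms(1), of "\<lambda>b. coef a b"] coef_sum_F[OF assms] by simp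

lemma decomp:
  fixes u :: "'a \<times> 'z \<Rightarrow> 'f"
  assumes u: "u \<in> free_space" and F: "finite F"
    and cov: "\<And>a z. u (a, z) \<noteq> 0 \<Longrightarrow> {b. coef a b \<noteq> 0} \<subseteq> F"
  shows "u - (\<Sum>b\<in>F. ptens (delta b) (phi b u)) \<in> lspan (tens_rel RA R')"
proof -
  let ?D = "\<lambda>u :: 'a \<times> 'z \<Rightarrow> 'f. u - (\<Sum>b\<in>F. ptens (delta b) (phi b u))"
  have lin: "linf ?D"
    by (intro linf_minus linf_id linf_sumf linf_comp[OF linf_ptens2 linf_phi]) auto
  have "?D u = lext (\<lambda>k. ?D (delta k)) u" by (rule lext_L[OF lin u, symmetric])
  also have "\<dots> \<in> lspan (tens_rel RA R')"
  proof (rule lext_in[OF lspan_subsp])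
    fix k assume k: "u k \<noteq> 0"
    obtain a z where kk: "k = (a, z)" by (cases k)
    have "?D (delta k) = ptens (delta a) (delta z) - (\<Sum>b\<in>F. ptens (smul (coef a b) (delta b)) (delta z))"
      by (simp add: kk phi_delta ptens_delta ptens_smul1 ptens_smul2)
    also have "\<dots> = ptens (delta a - (\<Sum>b\<in>F. smul (coef a b) (delta b))) (delta z)"
      by (simp add: ptens_diff1 ptens_sum1)
    also have "\<dots> \<in> lspan (tens_rel RA R')"
      by (rule T1[OF RA_free delta_coef[OF F cov]]) (use k kk in auto)
    finally show "?D (delta k) \<in> lspan (tens_rel RA R')" .
  qed
  finally show ?thesis .
qed


lemma br_anti: "brK y x = - brK x y"
proof -
  have e: "brK (x + y) (x + y) = brK x x + brK y x + (brK x y + brK y y)" by (simp add: br_add1 br_add2)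
  have "brK y x + brK x y = 0" using e br_alt[of "x + y"] br_alt[of x] br_alt[of y] by simp
  then have "brK x y + brK y x = 0" by (simp add: add.commute)
  then show ?thesis by (simp add: eq_neg_iff_add_eq_0 add.commute)
qed

lemma br_rel: "delta (brK x y) + delta (brK y x) \<in> RK'" if "RK' = lspan RK" for RK'
  using lr_neg[of "brK x y" sK] that by (simp add: br_anti[of y x] add.commute)

lemma p2_free[simp]: "p2 mA i \<in> (free_space :: (_ \<Rightarrow> 'f) set)"
  by (cases i) (auto simp: p2_def)
lemma p1_free[simp]: "p1 i \<in> (free_space :: (_ \<Rightarrow> 'f) set)"
  by (cases i) (auto simp: p1_def)
lemma p3_free[simp]: "p3 mA oneA i \<in> (free_space :: (_ \<Rightarrow> 'f) set)"
  by (cases i) (auto simp: p3_def)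
lemma gbr_free[simp]: "gbr i \<in> free_space"
  by (cases i) (auto simp: g_br_def)

lemma P2_sub: assumes t: "t \<in> free_space" and br: "lext gbr t \<in> lspan Rg" shows "P2 t \<in> W2"
proof -
  define s where "s = P2 t"
  have sf: "s \<in> free_space" unfolding s_def by (rule lext_free) simp
  define F where "F = (\<Union>k\<in>{k. s k \<noteq> 0}. {b. coef (fst k) b \<noteq> 0})"
  have F: "finite F" unfolding F_def using sf by (intro finite_UN_I) (auto simp: free_iff coef_fin)
  have cov: "{b. coef a b \<noteq> 0} \<subseteq> F" if "s (a, z) \<noteq> 0" for a z
  proof
    fix c assume "c \<in> {b. coef a b \<noteq> 0}"
    then show "c \<in> F" unfolding F_def using that by (intro UN_I[of "(a, z)"]) auto
  qed
  have dec: "s - (\<Sum>b\<in>F. ptens (delta b) (phi b s)) \<in> N2"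
    by (rule decomp[OF sf F cov])
  have Z: "phi b s \<in> Z2 RK brk" for b
  proof -
    define Q :: "('a \<times> 'k) \<times> ('a \<times> 'k) \<Rightarrow> ('k \<times> 'k \<Rightarrow> 'f)" where "Q i = phi b (p2 mA i)" for i
    have Qf: "Q i \<in> free_space" for i unfolding Q_def by simp
    have Qval: "Q ((a, x), (a', y)) = smul (coef (mA a a') b) (wedge (delta x) (delta y))" for a x a' y
      unfolding Q_def p2_def by (simp add: phi_ptens_left)
    have phis: "phi b s = lext Q t"
      unfolding s_def Q_def by (rule lext_commute[OF linf_phi]) simp
    have lam: "phi b s \<in> Lam2 RK"
      unfolding phis
    proof (rule lext_in[OF Lam2_subsp])
      fix i :: "('a \<times> 'k) \<times> ('a \<times> 'k)"
      obtain a x a' y where i: "i = ((a, x), (a', y))" by (cases i) auto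
      show "Q i \<in> Lam2 RK" unfolding i Qval by (intro subsp_smul[OF Lam2_subsp] wedge_Lam2) auto
    qed
    have h1: "lext brk (phi b s) = lext (\<lambda>i. lext brk (Q i)) t"
      unfolding phis by (rule lext_commute[OF linf_lext Qf])
    have h2: "phi b (lext gbr t) = lext (\<lambda>i. phi b (gbr i)) t"
      by (rule lext_commute[OF linf_phi]) simp
    have h3: "phi b (lext gbr t) \<in> lspan RK"
      by (rule phi_rel[OF RK_free]) (use br in \<open>simp add: g_rel_def\<close>)
    have h4: "phi b (gbr i) - lext brk (Q i) \<in> lspan RK" for i
    proof -
      obtain a x a' y where i: "i = ((a, x), (a', y))" by (cases i) auto
      have "phi b (gbr i) - lext brk (Q i)
          = smul (coef (mA a a') b) (smul (inverse 2) (delta (brK x y) + delta (brK y x)))"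
        using two unfolding i Qval
        by (simp add: g_br_def phi_ptens_left linf_smul[OF linf_lext] lext_wedge_dd fun_eq_iff
            fun_app_simps field_simps)
      also have "\<dots> \<in> lspan RK" by (intro lspan_smul br_rel) simp
      finally show ?thesis .
    qed
    have "lext brk (phi b s) = phi b (lext gbr t) - lext (\<lambda>i. phi b (gbr i) - lext brk (Q i)) t"
      unfolding h1 h2 lext_fdiff by simp
    also have "\<dots> \<in> lspan RK"
      by (intro lspan_diff h3 lext_in[OF lspan_subsp] h4)
    finally show ?thesis using lam unfolding Z2_def by simp
  qed
  have "(\<Sum>b\<in>F. ptens (delta b) (phi b s)) \<in> W2"
  proof (intro lspan_sum lspan_sup UnI1 CollectI)
    fix b show "\<exists>u z. ptens (delta b) (phi b s) = ptens u z \<and> u \<in> free_space \<and> z \<in> Z2 RK brk"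
      using Z[of b] by auto
  qed
  moreover have "s - (\<Sum>b\<in>F. ptens (delta b) (phi b s)) \<in> W2" using dec N2_W2 by blast
  ultimately have "(s - (\<Sum>b\<in>F. ptens (delta b) (phi b s))) + (\<Sum>b\<in>F. ptens (delta b) (phi b s)) \<in> W2"
    by (intro lspan_add)
  then show ?thesis unfolding s_def by simp
qed


section \<open>The reverse inclusion\<close>

definition Qs :: "(('a \<times> 'a) \<times> ('k \<times> 'k) \<Rightarrow> 'f) \<Rightarrow> ('a \<times> ('k \<times> 'k) \<Rightarrow> 'f) \<Rightarrow> (('a \<times> 'a) \<times> ('k \<times> 'k) \<Rightarrow> 'f) \<Rightarrow> bool" where
  "Qs c1 c2 c3 \<longleftrightarrow> (\<exists>t\<in>Z2 Rg gbr. c1 - P1 t \<in> N1 \<and> c2 - P2 t \<in> N2 \<and> c3 - P3 t \<in> N1)"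

lemma Zg_subsp: "subsp (Z2 Rg gbr)" by (rule Z2_subsp[OF Rg_free])
lemma Zg_free: "t \<in> Z2 Rg gbr \<Longrightarrow> t \<in> free_space" using Z2_free[OF Rg_free] by blast

lemma Qs_add: assumes "Qs a1 a2 a3" "Qs b1 b2 b3" shows "Qs (a1 + b1) (a2 + b2) (a3 + b3)"
proof -
  from assms obtain t t' where t: "t \<in> Z2 Rg gbr" "a1 - P1 t \<in> N1" "a2 - P2 t \<in> N2" "a3 - P3 t \<in> N1"
    and t': "t' \<in> Z2 Rg gbr" "b1 - P1 t' \<in> N1" "b2 - P2 t' \<in> N2" "b3 - P3 t' \<in> N1"
    unfolding Qs_def by blast
  have f: "t \<in> free_space" "t' \<in> free_space" using t t' Zg_free by auto
  have e: "(a + b) - (x + y) = (a - x) + (b - y)" for a b x y :: "_ \<Rightarrow> 'f" by (simp add: algebra_simps)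
  show ?thesis unfolding Qs_def
    by (intro bexI[of _ "t + t'"] conjI)
       (simp_all add: linf_add[OF linf_lext f] e lspan_add t t' subsp_add[OF Zg_subsp])
qed

lemma Qs_smul: assumes "Qs a1 a2 a3" shows "Qs (smul c a1) (smul c a2) (smul c a3)"
proof -
  from assms obtain t where t: "t \<in> Z2 Rg gbr" "a1 - P1 t \<in> N1" "a2 - P2 t \<in> N2" "a3 - P3 t \<in> N1"
    unfolding Qs_def by blast
  have f: "t \<in> free_space" using t Zg_free by auto
  show ?thesis unfolding Qs_def
    by (intro bexI[of _ "smul c t"] conjI)
       (simp_all add: linf_smul[OF linf_lext f] smul_diff[symmetric] lspan_smul t subsp_smul[OF Zg_subsp])
qed

lemma Qs_rel: assumes "r1 \<in> N1" "r2 \<in> N2" "r3 \<in> N1" shows "Qs r1 r2 r3"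
  unfolding Qs_def
  by (intro bexI[of _ 0] conjI) (simp_all add: linf_zero[OF linf_lext] assms subsp_zero[OF Zg_subsp])

lemma Qs_zero: "Qs 0 0 0" by (rule Qs_rel) (simp_all add: lspan_zero)

lemma V1_subsp: "subsp {c. Qs c 0 0}"
  unfolding subsp_def using Qs_add[of _ 0 0 _ 0 0] Qs_smul[of _ 0 0] Qs_zero
  by auto
lemma V2_subsp: "subsp {c. Qs 0 c 0}"
  unfolding subsp_def using Qs_add[of 0 _ 0 0 _ 0] Qs_smul[of 0 _ 0] Qs_zero
  by auto
lemma V3_subsp: "subsp {c. Qs 0 0 c}"
  unfolding subsp_def using Qs_add[of 0 0 _ 0 0] Qs_smul[of 0 0] Qs_zero
  by auto

lemma core1: "Qs (ptens (wedge (delta a) (delta b)) (vee (delta x) (delta y))) 0 0"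
proof -
  define w1 :: "('a \<times> 'k) \<times> ('a \<times> 'k) \<Rightarrow> 'f" where "w1 = wedge (delta (a, x)) (delta (b, y))"
  define w2 :: "('a \<times> 'k) \<times> ('a \<times> 'k) \<Rightarrow> 'f" where "w2 = wedge (delta (a, y)) (delta (b, x))"
  define t where "t = smul (inverse 2) (w1 + w2)"
  have wf: "w1 \<in> free_space" "w2 \<in> free_space" unfolding w1_def w2_def by auto
  have tL: "t \<in> Lam2 Rg" unfolding t_def w1_def w2_def
    by (intro subsp_smul[OF Lam2_subsp] subsp_add[OF Lam2_subsp] wedge_Lam2) auto
  have lin: "lext \<phi> t = smul (inverse 2) (lext \<phi> w1 + lext \<phi> w2)" for \<phi> :: "_ \<Rightarrow> (_ \<Rightarrow> 'f)"
    unfolding t_def by (simp add: linf_smul[OF linf_lext] linf_add[OF linf_lext] wf)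
  have "lext gbr t = 0"
    unfolding lin w1_def w2_def
    by (simp add: lext_wedge_dd g_br_def mA_comm[of b a] fun_eq_iff fun_app_simps algebra_simps)
  then have tZ: "t \<in> Z2 Rg gbr" using tL lspan_zero unfolding Z2_def by simp
  let ?X = "ptens (wedge (delta a) (delta b)) (vee (delta x) (delta y)) :: _ \<Rightarrow> 'f"
  have "P1 t = smul (inverse 2) (?X + ?X)"
    unfolding lin w1_def w2_def P1_wedge by (simp add: p1_def vee_swap[of "delta y" "delta x"])
  also have "\<dots> = ?X" using two by (simp add: fun_eq_iff fun_app_simps field_simps)
  finally have h1: "P1 t = ?X" .
  have h2: "P2 t = 0"
    unfolding lin w1_def w2_def P2_wedge
    by (simp add: p2_def wedge_swap[of "delta y" "delta x"] ptens_neg2)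
  have h3: "P3 t = 0"
    unfolding lin w1_def w2_def P3_wedge
    by (simp add: p3_def wedge_swap[of "delta y" "delta x"] ptens_neg2)
  show ?thesis unfolding Qs_def
    by (intro bexI[of _ t] conjI) (simp_all add: h1 h2 h3 tZ lspan_zero)
qed


lemma brk_anti_rel: "brk i - (\<lambda>(x, y). smul (inverse 2) (delta (brK x y) - delta (brK y x))) i \<in> lspan RK"
proof -
  obtain x y where i: "i = (x, y)" by (cases i)
  have "brk i - (\<lambda>(x, y). smul (inverse 2) (delta (brK x y) - delta (brK y x))) i
      = smul (inverse 2) (delta (brK x y) + delta (brK y x))"
    using two by (simp add: i fun_eq_iff fun_app_simps field_simps)
  also have "\<dots> \<in> lspan RK" by (intro lspan_smul br_rel) simp
  finally show ?thesis .
qed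

lemma Bp_rel: assumes z: "z \<in> Z2 RK brk"
  shows "lext (\<lambda>(x, y). smul (inverse 2) (delta (brK x y) - delta (brK y x))) z \<in> lspan RK"
proof -
  let ?B = "\<lambda>(x, y). smul (inverse 2) (delta (brK x y) - delta (brK y x)) :: 'k \<Rightarrow> 'f"
  have zb: "lext brk z \<in> lspan RK" using z unfolding Z2_def by simp
  have "lext ?B z = lext brk z - lext (\<lambda>i. brk i - ?B i) z" by (simp add: lext_fdiff)
  also have "\<dots> \<in> lspan RK"
    by (intro lspan_diff zb lext_in[OF lspan_subsp] brk_anti_rel)
  finally show ?thesis .
qed

lemma core2: assumes z: "z \<in> Z2 RK brk" shows "Qs 0 (ptens (delta a) z) 0"
proof -
  have zf: "z \<in> free_space" using z Z2_free[OF RK_free] by blast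
  have zL: "z \<in> Lam2 RK" using z unfolding Z2_def by simp
  define \<psi> :: "'k \<times> 'k \<Rightarrow> (('a \<times> 'k) \<times> ('a \<times> 'k) \<Rightarrow> 'f)"
    where "\<psi> = (\<lambda>(x, y). wedge (delta (a, x)) (delta (oneA, y)))"
  have \<psi>f: "\<psi> i \<in> free_space" for i by (cases i) (simp add: \<psi>_def)
  define t where "t = lext \<psi> z"
  have tL: "t \<in> Lam2 Rg" unfolding t_def
    by (rule lext_in[OF Lam2_subsp]) (auto simp: \<psi>_def intro!: wedge_Lam2 split: prod.split)
  have a1: "mA a oneA = a" by (simp add: mA_comm[of a oneA] mA_unit)
  have comm: "\<And>\<phi>. lext \<phi> t = lext (\<lambda>i. lext \<phi> (\<psi> i)) z"
    unfolding t_def by (rule lext_commute[OF linf_lext \<psi>f])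
  let ?B = "\<lambda>(x, y). smul (inverse 2) (delta (brK x y) - delta (brK y x)) :: 'k \<Rightarrow> 'f"
  have "(\<lambda>i. lext gbr (\<psi> i)) = (\<lambda>i. ptens (delta a) (?B i))"
  proof
    fix i :: "'k \<times> 'k" obtain x y where i: "i = (x, y)" by (cases i)
    show "lext gbr (\<psi> i) = ptens (delta a) (?B i)"
      by (simp add: i \<psi>_def lext_wedge_dd g_br_def a1 mA_unit ptens_smul2 ptens_diff2)
  qed
  then have "lext gbr t = lext (\<lambda>i. ptens (delta a) (?B i)) z" by (simp add: comm)
  also have "\<dots> = ptens (delta a) (lext ?B z)"
    by (rule lext_commute[OF linf_ptens2, symmetric]) (auto split: prod.split)
  also have "\<dots> \<in> lspan Rg" unfolding g_rel_def
    by (rule T2[OF RK_free Bp_rel[OF z]]) simp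
  finally have tZ: "t \<in> Z2 Rg gbr" using tL unfolding Z2_def by simp
  let ?V = "\<lambda>(x, y). vee (delta x) (delta y) :: 'k \<times> 'k \<Rightarrow> 'f"
  let ?W = "\<lambda>(x, y). wedge (delta x) (delta y) :: 'k \<times> 'k \<Rightarrow> 'f"
  have "(\<lambda>i. P1 (\<psi> i)) = (\<lambda>i. ptens (wedge (delta a) (delta oneA)) (?V i))"
  proof
    fix i :: "'k \<times> 'k" obtain x y where i: "i = (x, y)" by (cases i)
    show "P1 (\<psi> i) = ptens (wedge (delta a) (delta oneA)) (?V i)"
      by (simp only: i \<psi>_def prod.case P1_wedge) (simp add: p1_def)
  qed
  then have "P1 t = lext (\<lambda>i. ptens (wedge (delta a) (delta oneA)) (?V i)) z" by (simp add: comm)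
  also have "\<dots> = ptens (wedge (delta a) (delta oneA)) (lext ?V z)"
    by (rule lext_commute[OF linf_ptens2, symmetric]) (auto split: prod.split)
  finally have h1: "P1 t = ptens (wedge (delta a) (delta oneA)) (lext ?V z)" .
  have "P1 t \<in> N1" unfolding h1
    by (rule T2[OF TK_free lam_sym[OF RK_free zL]]) simp
  then have h1': "0 - P1 t \<in> N1" by (rule lspan_diff[OF lspan_zero])
  have "(\<lambda>i. P2 (\<psi> i)) = (\<lambda>i. ptens (delta a) (?W i))"
  proof
    fix i :: "'k \<times> 'k" obtain x y where i: "i = (x, y)" by (cases i)
    show "P2 (\<psi> i) = ptens (delta a) (?W i)"
      by (simp only: i \<psi>_def prod.case P2_wedge) (simp add: p2_def a1)
  qed
  then have "P2 t = lext (\<lambda>i. ptens (delta a) (?W i)) z" by (simp add: comm)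
  also have "\<dots> = ptens (delta a) (lext ?W z)"
    by (rule lext_commute[OF linf_ptens2, symmetric]) (auto split: prod.split)
  finally have "ptens (delta a) z - P2 t = ptens (delta a) (z - lext ?W z)" by (simp add: ptens_diff2)
  also have "\<dots> \<in> N2" by (rule T2[OF TK_free lam_id[OF two RK_free zL]]) simp
  finally have h2: "ptens (delta a) z - P2 t \<in> N2" .
  have "(\<lambda>i. P3 (\<psi> i)) = (\<lambda>i. 0)"
  proof
    fix i :: "'k \<times> 'k" obtain x y where i: "i = (x, y)" by (cases i)
    show "P3 (\<psi> i) = 0"
      by (simp only: i \<psi>_def prod.case P3_wedge) (simp add: p3_def a1)
  qed
  then have h3: "P3 t = 0" by (simp add: comm)
  show ?thesis unfolding Qs_def
    by (intro bexI[of _ t] conjI) (simp_all add: h1'[simplified] h2 h3 tZ lspan_zero)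
qed

lemma core3: assumes i: "i \<in> I_A sA mA" shows "Qs 0 0 (ptens i (wedge (delta x) (delta y)))"
proof -
  have iS: "i \<in> Sym2 RA" and im: "lext mm i \<in> lspan RA" using i unfolding I_A_def by auto
  have ifr: "i \<in> free_space" using iS Sym2_free[OF RA_free] by blast
  define \<tau> :: "'a \<times> 'a \<Rightarrow> (('a \<times> 'k) \<times> ('a \<times> 'k) \<Rightarrow> 'f)"
    where "\<tau> = (\<lambda>(a, b). smul (inverse 2) (wedge (delta (a, x)) (delta (b, y)) - wedge (delta (a, y)) (delta (b, x))))"
  have \<tau>f: "\<tau> k \<in> free_space" for k by (cases k) (simp add: \<tau>_def)
  define t where "t = lext \<tau> i"
  have tL: "t \<in> Lam2 Rg" unfolding t_def
    by (rule lext_in[OF Lam2_subsp])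
       (auto simp: \<tau>_def intro!: wedge_Lam2 subsp_smul[OF Lam2_subsp] subsp_diff[OF Lam2_subsp] split: prod.split)
  have comm: "\<And>\<phi>. lext \<phi> t = lext (\<lambda>k. lext \<phi> (\<tau> k)) i"
    unfolding t_def by (rule lext_commute[OF linf_lext \<tau>f])
  have lin: "lext \<phi> (\<tau> (a, b)) = smul (inverse 2) (lext \<phi> (wedge (delta (a, x)) (delta (b, y)))
      - lext \<phi> (wedge (delta (a, y)) (delta (b, x))))" for \<phi> :: "_ \<Rightarrow> (_ \<Rightarrow> 'f)" and a b
    by (simp add: \<tau>_def linf_smul[OF linf_lext] linf_diff[OF linf_lext])
  let ?Bxy = "smul (inverse 2) (delta (brK x y) - delta (brK y x)) :: 'k \<Rightarrow> 'f"
  let ?Wxy = "wedge (delta x) (delta y) :: 'k \<times> 'k \<Rightarrow> 'f"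
  let ?V = "\<lambda>(a, b). vee (delta a) (delta b) :: 'a \<times> 'a \<Rightarrow> 'f"
  have mmf: "mm k \<in> free_space" for k by (cases k) simp
  have "(\<lambda>k. lext gbr (\<tau> k)) = (\<lambda>k. ptens (mm k) ?Bxy)"
  proof
    fix k :: "'a \<times> 'a" obtain a b where k: "k = (a, b)" by (cases k)
    show "lext gbr (\<tau> k) = ptens (mm k) ?Bxy"
      using two four eight by (simp add: k lin lext_wedge_dd g_br_def mA_comm[of b a] fun_eq_iff fun_app_simps field_simps)
  qed
  then have "lext gbr t = lext (\<lambda>k. ptens (mm k) ?Bxy) i" by (simp add: comm)
  also have "\<dots> = ptens (lext mm i) ?Bxy"
    by (rule lext_commute[OF linf_ptens1 mmf, symmetric])
  also have "\<dots> \<in> lspan Rg" unfolding g_rel_def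
    by (rule T1[OF RA_free im]) simp
  finally have tZ: "t \<in> Z2 Rg gbr" using tL unfolding Z2_def by simp
  have "(\<lambda>k. P1 (\<tau> k)) = (\<lambda>k. 0)"
  proof
    fix k :: "'a \<times> 'a" obtain a b where k: "k = (a, b)" by (cases k)
    show "P1 (\<tau> k) = 0"
      by (simp only: k lin P1_wedge) (simp add: p1_def vee_swap[of "delta y" "delta x"])
  qed
  then have h1: "P1 t = 0" by (simp add: comm)
  have "(\<lambda>k. P2 (\<tau> k)) = (\<lambda>k. ptens (mm k) ?Wxy)"
  proof
    fix k :: "'a \<times> 'a" obtain a b where k: "k = (a, b)" by (cases k)
    show "P2 (\<tau> k) = ptens (mm k) ?Wxy"
      by (simp only: k lin P2_wedge)
         (use two in \<open>simp add: p2_def wedge_swap[of "delta y" "delta x"] fun_eq_iff fun_app_simps field_simps\<close>)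
  qed
  then have "P2 t = lext (\<lambda>k. ptens (mm k) ?Wxy) i" by (simp add: comm)
  also have "\<dots> = ptens (lext mm i) ?Wxy"
    by (rule lext_commute[OF linf_ptens1 mmf, symmetric])
  finally have "0 - P2 t = - ptens (lext mm i) ?Wxy" by simp
  also have "\<dots> \<in> N2" by (intro lspan_neg T1[OF RA_free im]) simp
  finally have h2: "0 - P2 t \<in> N2" .
  have "(\<lambda>k. P3 (\<tau> k)) = (\<lambda>k. ptens (?V k - vee (mm k) (delta oneA)) ?Wxy)"
  proof
    fix k :: "'a \<times> 'a" obtain a b where k: "k = (a, b)" by (cases k)
    show "P3 (\<tau> k) = ptens (?V k - vee (mm k) (delta oneA)) ?Wxy"
      by (simp only: k lin P3_wedge)
         (use two in \<open>simp add: p3_def wedge_swap[of "delta y" "delta x"] fun_eq_iff fun_app_simps field_simps\<close>)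
  qed
  then have "P3 t = lext (\<lambda>k. ptens (?V k - vee (mm k) (delta oneA)) ?Wxy) i" by (simp add: comm)
  also have "\<dots> = ptens (lext (\<lambda>k. ?V k - vee (mm k) (delta oneA)) i) ?Wxy"
    by (rule lext_commute[OF linf_ptens1, symmetric]) (auto split: prod.split)
  also have "lext (\<lambda>k. ?V k - vee (mm k) (delta oneA)) i = lext ?V i - lext (\<lambda>k. vee (mm k) (delta oneA)) i"
    by (rule lext_fdiff)
  also have "lext (\<lambda>k. vee (mm k) (delta oneA)) i = vee (lext mm i) (delta oneA)"
    by (rule lext_commute[OF linf_vee1 mmf, symmetric])
  finally have "ptens i ?Wxy - P3 t = ptens ((i - lext ?V i) + vee (lext mm i) (delta oneA)) ?Wxy"
    by (simp add: ptens_diff1[symmetric] ptens_add1[symmetric] algebra_simps)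
  also have "\<dots> \<in> N1"
    by (intro T1[OF TA_free] lspan_add sym_id[OF two RA_free iS] vee_rel1[OF RA_free im]) simp_all
  finally have h3: "ptens i ?Wxy - P3 t \<in> N1" .
  show ?thesis unfolding Qs_def
    by (intro bexI[of _ t] conjI) (simp_all add: h1 h2[simplified] h3 tZ lspan_zero)
qed


lemma V1_gen: assumes u: "u \<in> Lam2 RA" and v: "v \<in> Sym2 RK" shows "Qs (ptens u v) 0 0"
proof -
  let ?G = "{wedge v w |v w. v \<in> free_space \<and> w \<in> free_space} \<union> TA"
  let ?H = "{vee v w |v w. v \<in> free_space \<and> w \<in> free_space} \<union> TK"
  have G: "?G \<subseteq> free_space" using TA_free by auto
  have H: "?H \<subseteq> free_space" using TK_free by auto
  have "ptens u v \<in> {c. Qs c 0 0}"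
  proof (rule bilin_span[where B = ptens, OF V1_subsp G H linf_ptens1 linf_ptens2 _ u[unfolded Lam2_def] v[unfolded Sym2_def]])
    fix g h assume g: "g \<in> ?G" and h: "h \<in> ?H"
    have gf: "g \<in> free_space" and hf: "h \<in> free_space" using g h G H by auto
    show "ptens g h \<in> {c. Qs c 0 0}"
    proof (cases "g \<in> TA")
      case True
      have "ptens g h \<in> N1" by (rule T1[OF TA_free lspan_sup[OF True] hf])
      then show ?thesis by (simp add: Qs_rel lspan_zero)
    next
      case gA: False
      show ?thesis
      proof (cases "h \<in> TK")
        case True
        have "ptens g h \<in> N1" by (rule T2[OF TK_free lspan_sup[OF True] gf])
        then show ?thesis by (simp add: Qs_rel lspan_zero)
      next
        case False
        from g gA obtain p q where pq: "g = wedge p q" "p \<in> free_space" "q \<in> free_space" by auto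
        from h False obtain p' q' where pq': "h = vee p' q'" "p' \<in> free_space" "q' \<in> free_space" by auto
        have "ptens (wedge p q) h \<in> {c. Qs c 0 0}"
        proof (rule wedge_reduce[OF linf_ptens1 V1_subsp _ pq(2,3)])
          fix i j
          show "ptens (wedge (delta i) (delta j)) h \<in> {c. Qs c 0 0}"
            unfolding pq'(1)
            by (rule vee_reduce[OF linf_ptens2 V1_subsp _ pq'(2,3)]) (simp add: core1)
        qed
        then show ?thesis using pq by simp
      qed
    qed
  qed
  then show ?thesis by simp
qed

lemma V2_gen: assumes u: "u \<in> free_space" and z: "z \<in> Z2 RK brk" shows "Qs 0 (ptens u z) 0"
proof -
  have "ptens u z \<in> {c. Qs 0 c 0}"
    by (rule lin_span[OF linf_ptens1 _ V2_subsp _ u[unfolded free_lspan]]) (auto simp: core2[OF z])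
  then show ?thesis by simp
qed

lemma V3_gen: assumes i: "i \<in> I_A sA mA" and w: "w \<in> Lam2 RK" shows "Qs 0 0 (ptens i w)"
proof -
  have ifr: "i \<in> free_space" using i Sym2_free[OF RA_free] unfolding I_A_def by blast
  have "ptens i w \<in> {c. Qs 0 0 c}"
  proof (rule lam_map[OF RK_free linf_ptens2 V3_subsp _ _ w])
    fix a b show "ptens i (wedge (delta a) (delta b)) \<in> {c. Qs 0 0 c}" by (simp add: core3[OF i])
  next
    fix r assume "r \<in> TK"
    then have "ptens i r \<in> N1" by (intro T2[OF TK_free lspan_sup ifr])
    then show "ptens i r \<in> {c. Qs 0 0 c}" by (simp add: Qs_rel lspan_zero)
  qed
  then show ?thesis by simp
qed

lemma W1_V1: "c \<in> W1 \<Longrightarrow> Qs c 0 0"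
proof -
  assume c: "c \<in> W1"
  have "W1 \<subseteq> {c. Qs c 0 0}"
  proof (rule lspan_least[OF V1_subsp], safe)
    fix u :: "'a \<times> 'a \<Rightarrow> 'f" and v :: "'k \<times> 'k \<Rightarrow> 'f" assume "u \<in> Lam2 RA" "v \<in> Sym2 RK"
    then show "Qs (ptens u v) 0 0" by (rule V1_gen)
  next
    fix r assume "r \<in> tens_rel TA TK"
    then show "Qs r 0 0" by (intro Qs_rel lspan_sup lspan_zero)
  qed
  then show ?thesis using c by blast
qed

lemma W2_V2: "c \<in> W2 \<Longrightarrow> Qs 0 c 0"
proof -
  assume c: "c \<in> W2"
  have "W2 \<subseteq> {c. Qs 0 c 0}"
  proof (rule lspan_least[OF V2_subsp], safe)
    fix u :: "'a \<Rightarrow> 'f" and z :: "'k \<times> 'k \<Rightarrow> 'f" assume "u \<in> free_space" "z \<in> Z2 RK brk"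
    then show "Qs 0 (ptens u z) 0" by (rule V2_gen)
  next
    fix r assume "r \<in> tens_rel RA TK"
    then show "Qs 0 r 0" by (intro Qs_rel lspan_sup lspan_zero)
  qed
  then show ?thesis using c by blast
qed

lemma W3_V3: "c \<in> W3 \<Longrightarrow> Qs 0 0 c"
proof -
  assume c: "c \<in> W3"
  have "W3 \<subseteq> {c. Qs 0 0 c}"
  proof (rule lspan_least[OF V3_subsp], safe)
    fix i :: "'a \<times> 'a \<Rightarrow> 'f" and w :: "'k \<times> 'k \<Rightarrow> 'f" assume "i \<in> I_A sA mA" "w \<in> Lam2 RK"
    then show "Qs 0 0 (ptens i w)" by (rule V3_gen)
  next
    fix r assume "r \<in> tens_rel TA TK"
    then show "Qs 0 0 r" by (intro Qs_rel lspan_sup lspan_zero)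
  qed
  then show ?thesis using c by blast
qed

lemma main:
  "{(c1, c2, c3). \<exists>t \<in> Z2 Rg gbr. c1 - P1 t \<in> N1 \<and> c2 - P2 t \<in> N2 \<and> c3 - P3 t \<in> N1}
   = W1 \<times> W2 \<times> W3"
proof (intro equalityI subsetI)
  fix c assume "c \<in> {(c1, c2, c3). \<exists>t \<in> Z2 Rg gbr. c1 - P1 t \<in> N1 \<and> c2 - P2 t \<in> N2 \<and> c3 - P3 t \<in> N1}"
  then obtain c1 c2 c3 t where c: "c = (c1, c2, c3)" and t: "t \<in> Z2 Rg gbr"
    and h: "c1 - P1 t \<in> N1" "c2 - P2 t \<in> N2" "c3 - P3 t \<in> N1" by blast
  have tL: "t \<in> Lam2 Rg" and tb: "lext gbr t \<in> lspan Rg" using t unfolding Z2_def by auto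
  have tf: "t \<in> free_space" using t Zg_free by blast
  have "(c1 - P1 t) + P1 t \<in> W1" by (intro lspan_add P1_sub[OF tL]) (use h N1_W1 in blast)
  moreover have "(c2 - P2 t) + P2 t \<in> W2" by (intro lspan_add P2_sub[OF tf tb]) (use h N2_W2 in blast)
  moreover have "(c3 - P3 t) + P3 t \<in> W3" by (intro lspan_add P3_sub[OF tL]) (use h N1_W3 in blast)
  ultimately show "c \<in> W1 \<times> W2 \<times> W3" using c by simp
next
  fix c assume "c \<in> W1 \<times> W2 \<times> W3"
  then obtain c1 c2 c3 where c: "c = (c1, c2, c3)" "c1 \<in> W1" "c2 \<in> W2" "c3 \<in> W3" by auto
  have "Qs (c1 + 0 + 0) (0 + c2 + 0) (0 + 0 + c3)"
    by (intro Qs_add W1_V1 W2_V2 W3_V3 c)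
  then show "c \<in> {(c1, c2, c3). \<exists>t \<in> Z2 Rg gbr. c1 - P1 t \<in> N1 \<and> c2 - P2 t \<in> N2 \<and> c3 - P3 t \<in> N1}"
    using c(1) unfolding Qs_def by simp
qed

end

theorem lemma2p1:
  fixes sA :: "'f::field \<Rightarrow> 'a::ab_group_add \<Rightarrow> 'a"
    and mA :: "'a \<Rightarrow> 'a \<Rightarrow> 'a" and oneA :: 'a
    and sK :: "'f \<Rightarrow> 'k::ab_group_add \<Rightarrow> 'k"
    and brK :: "'k \<Rightarrow> 'k \<Rightarrow> 'k"
  assumes two: "(2::'f) \<noteq> 0"
    and vsA: "vector_space sA"
    and mA_add1: "\<And>a b c. mA (a + b) c = mA a c + mA b c"
    and mA_add2: "\<And>a b c. mA a (b + c) = mA a b + mA a c"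
    and mA_scale1: "\<And>r a b. mA (sA r a) b = sA r (mA a b)"
    and mA_scale2: "\<And>r a b. mA a (sA r b) = sA r (mA a b)"
    and mA_assoc: "\<And>a b c. mA (mA a b) c = mA a (mA b c)"
    and mA_comm: "\<And>a b. mA a b = mA b a"
    and mA_unit: "\<And>a. mA oneA a = a"
    and vsK: "vector_space sK"
    and br_add1: "\<And>x y z. brK (x + y) z = brK x z + brK y z"
    and br_add2: "\<And>x y z. brK x (y + z) = brK x y + brK x z"
    and br_scale1: "\<And>r x y. brK (sK r x) y = sK r (brK x y)"
    and br_scale2: "\<And>r x y. brK x (sK r y) = sK r (brK x y)"
    and br_alt: "\<And>x. brK x x = 0"
    and br_jacobi: "\<And>x y z. brK x (brK y z) + brK y (brK z x) + brK z (brK x y) = 0"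
  shows
    "{(c1, c2, c3). \<exists>t \<in> Z2 (g_rel sA sK) (g_br mA brK).
        c1 - lext p1 t \<in> lspan (tens_rel (tens_rel (lin_rel sA) (lin_rel sA))
                                          (tens_rel (lin_rel sK) (lin_rel sK)))
      \<and> c2 - lext (p2 mA) t \<in> lspan (tens_rel (lin_rel sA) (tens_rel (lin_rel sK) (lin_rel sK)))
      \<and> c3 - lext (p3 mA oneA) t \<in> lspan (tens_rel (tens_rel (lin_rel sA) (lin_rel sA))
                                          (tens_rel (lin_rel sK) (lin_rel sK)))}
     = lspan ({ptens u v | u v. u \<in> Lam2 (lin_rel sA) \<and> v \<in> Sym2 (lin_rel sK)}
              \<union> tens_rel (tens_rel (lin_rel sA) (lin_rel sA)) (tens_rel (lin_rel sK) (lin_rel sK)))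
     \<times> lspan ({ptens u z | u z. u \<in> free_space \<and> z \<in> Z2 (lin_rel sK) (\<lambda>(x, y). delta (brK x y))}
              \<union> tens_rel (lin_rel sA) (tens_rel (lin_rel sK) (lin_rel sK)))
     \<times> lspan ({ptens i w | i w. i \<in> I_A sA mA \<and> w \<in> Lam2 (lin_rel sK)}
              \<union> tens_rel (tens_rel (lin_rel sA) (lin_rel sA)) (tens_rel (lin_rel sK) (lin_rel sK)))"
proof -
  interpret L21 sA mA oneA sK brK
    by (rule L21.intro) (rule assms)+
  show ?thesis by (rule main)
qed

end
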